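(* Let $n\geq 2$ and let $\Phi:\mathfrak{B}([n])\to \mathbf{Gpd}$ be a covariant strict 2-functor (equivalently, a functor from the poset $\mathfrak{B}([n])$ to the category of small groupoids). Suppose: (A1) for every integer $1\leq k\leq n-1$, the condition $A^{[k]}_\emptyset$ holds, i.e. the canonical functor $\operatorname{colim}_{\mathfrak{B}([k])}\Phi\to \Phi([k])$ is injective on objects; (A2) for every integer $1\leq k\leq n-2$ and every subset $U\subseteq\{k+2,\dots,n\}$, the condition $A^V_U$ holds, where $V=[k]\sqcup U$, i.e. the canonical functor $\operatorname{colim}_{\mathfrak{B}(V:U)}\Phi\to \Phi(V)$ is injective on objects. Then the comparison functor $\delta:\operatorname{2colim}_{\mathfrak{B}([n])}\Phi\to \operatorname{colim}_{\mathfrak{B}([n])}\Phi$ is an equivalence of categories.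
   Context: For $n\ge1$, $[n]=\{1,\dots,n\}$. For a finite set $V$, $\mathfrak{B}(V)$ is the poset (ordered by inclusion, regarded as a category) of all proper subsets of $V$; for a proper subset $U\subsetneq V$, $\mathfrak{B}(V:U)=\{X: U\subseteq X\subsetneq V\}$. For $k<n$, $\mathfrak{B}([k])$ is regarded as a subposet of $\mathfrak{B}([n])$, and for $U\subseteq V\subseteq[n]$ with $V\neq[n]$, $\mathfrak{B}(V:U)$ is regarded as a subposet of $\mathfrak{B}([n])$; colimits over these subposets are of the restriction of $\Phi$. For $S\subseteq T$ write $\Phi_{S,T}:\Phi(S)\to\Phi(T)$ for the induced functor. $\mathbf{Gpd}$ is the 2-category of small groupoids, functors and natural transformations. A functor is injective on objects if its map on object sets is injective. The colimit $\operatorname{colim}\Phi$ is the ordinary colimit in the category of small groupoids (it represents $\mathcal G\mapsto\lim_i\operatorname{Hom}(\Phi(i),\mathcal G)$); the canonical functor $\operatorname{colim}_{\mathfrak{B}(V:U)}\Phi\to\Phi(V)$ is induced by the functors $\Phi_{X,V}$. The 2-colimit $\operatorname{2colim}\Phi$ is a groupoid $\mathcal C$ with an equivalence $\operatorname{Hom}_{\mathbf{Gpd}}(\mathcal C,\mathcal G)\simeq \operatorname{2lim}_i\operatorname{Hom}_{\mathbf{Gpd}}(\Phi(i),\mathcal G)$ natural in groupoids $\mathcal G$, where for a functor $\Psi:I^{op}\to\mathbf{Gpd}$ on a poset $I$, $\operatorname{2lim}\Psi$ has objects $(x_i,\xi_{ij})$ with $x_i\in\Psi(i)$ and isomorphisms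 $\xi_{ij}:\Psi_{ij}(x_j)\to x_i$ ($i\le j$) satisfying $\xi_{ik}=\xi_{ij}\circ\Psi_{ij}(\xi_{jk})$ for $i\le j\le k$, and morphisms families $f_i:x_i\to y_i$ with $f_i\circ\xi_{ij}=\eta_{ij}\circ\Psi_{ij}(f_j)$. Concretely, $\operatorname{2colim}\Phi$ is the groupoid obtained from the Grothendieck construction $\int_I\Phi$ (objects $(i,x)$ with $x\in\Phi(i)$; morphisms $(i,x)\to(j,y)$ for $i\le j$ are morphisms $\Phi_{i,j}(x)\to y$ in $\Phi(j)$) by inverting all morphisms. The comparison functor $\delta$ is the functor corresponding (via these universal properties) to the fully faithful functor $\lim\operatorname{Hom}(\Phi,\mathcal G)\to\operatorname{2lim}\operatorname{Hom}(\Phi,\mathcal G)$, $(x_i)\mapsto(x_i,\mathrm{id})$; concretely it sends $(i,x)$ to the image of $x$ under $\Phi(i)\to\operatorname{colim}\Phi$. *)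

theory Defs
  imports Main
begin

text \<open>A (small) groupoid: object set, arrow set, domain, codomain,
  composition (cmp g f = g after f), identities, inverses.\<close>
record ('o,'m) gpd =
  Obj :: "'o set"
  Arr :: "'m set"
  dom :: "'m \<Rightarrow> 'o"
  cod :: "'m \<Rightarrow> 'o"
  cmp :: "'m \<Rightarrow> 'm \<Rightarrow> 'm"
  ide :: "'o \<Rightarrow> 'm"
  inv :: "'m \<Rightarrow> 'm"

definition is_gpd :: "('o,'m) gpd \<Rightarrow> bool" where
  "is_gpd G \<longleftrightarrow>
     (\<forall>f\<in>Arr G. dom G f \<in> Obj G \<and> cod G f \<in> Obj G) \<and>
     (\<forall>a\<in>Obj G. ide G a \<in> Arr G \<and> dom G (ide G a) = a \<and> cod G (ide G a) = a) \<and>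
     (\<forall>f\<in>Arr G. \<forall>g\<in>Arr G. cod G f = dom G g \<longrightarrow>
        cmp G g f \<in> Arr G \<and> dom G (cmp G g f) = dom G f \<and> cod G (cmp G g f) = cod G g) \<and>
     (\<forall>f\<in>Arr G. \<forall>g\<in>Arr G. \<forall>h\<in>Arr G. cod G f = dom G g \<longrightarrow> cod G g = dom G h \<longrightarrow>
        cmp G h (cmp G g f) = cmp G (cmp G h g) f) \<and>
     (\<forall>f\<in>Arr G. cmp G f (ide G (dom G f)) = f \<and> cmp G (ide G (cod G f)) f = f) \<and>
     (\<forall>f\<in>Arr G. inv G f \<in> Arr G \<and> dom G (inv G f) = cod G f \<and> cod G (inv G f) = dom G f \<and>
        cmp G (inv G f) f = ide G (dom G f) \<and> cmp G f (inv G f) = ide G (cod G f))"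

definition is_functor ::
  "('o,'m) gpd \<Rightarrow> ('p,'n) gpd \<Rightarrow> ('o \<Rightarrow> 'p) \<Rightarrow> ('m \<Rightarrow> 'n) \<Rightarrow> bool" where
  "is_functor G H Fo Fm \<longleftrightarrow>
     (\<forall>a\<in>Obj G. Fo a \<in> Obj H) \<and>
     (\<forall>f\<in>Arr G. Fm f \<in> Arr H \<and> dom H (Fm f) = Fo (dom G f) \<and> cod H (Fm f) = Fo (cod G f)) \<and>
     (\<forall>f\<in>Arr G. \<forall>g\<in>Arr G. cod G f = dom G g \<longrightarrow> Fm (cmp G g f) = cmp H (Fm g) (Fm f)) \<and>
     (\<forall>a\<in>Obj G. Fm (ide G a) = ide H (Fo a))"

definition hom :: "('o,'m) gpd \<Rightarrow> 'o \<Rightarrow> 'o \<Rightarrow> 'm set" where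
  "hom G a b = {f \<in> Arr G. dom G f = a \<and> cod G f = b}"

definition is_equivalence ::
  "('o,'m) gpd \<Rightarrow> ('p,'n) gpd \<Rightarrow> ('o \<Rightarrow> 'p) \<Rightarrow> ('m \<Rightarrow> 'n) \<Rightarrow> bool" where
  "is_equivalence G H Fo Fm \<longleftrightarrow>
     is_functor G H Fo Fm \<and>
     (\<forall>a\<in>Obj G. \<forall>b\<in>Obj G. bij_betw Fm (hom G a b) (hom H (Fo a) (Fo b))) \<and>
     (\<forall>y\<in>Obj H. \<exists>x\<in>Obj G. hom H (Fo x) y \<noteq> {})"

section \<open>Groupoids presented by generators and relations\<close>

text \<open>A path in a graph with vertices 'v and edges 'e: start vertex, word of
  edges with orientation (True = forward, False = formal inverse), end vertex.
  Words are read in diagrammatic order (first letter is traversed first).\<close>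
type_synonym ('v,'e) path = "'v \<times> ('e \<times> bool) list \<times> 'v"

fun is_walk :: "'e set \<Rightarrow> ('e \<Rightarrow> 'v) \<Rightarrow> ('e \<Rightarrow> 'v) \<Rightarrow> 'v \<Rightarrow> ('e \<times> bool) list \<Rightarrow> 'v \<Rightarrow> bool" where
  "is_walk E s t a [] b \<longleftrightarrow> a = b"
| "is_walk E s t a ((e,True) # w) b \<longleftrightarrow> e \<in> E \<and> s e = a \<and> is_walk E s t (t e) w b"
| "is_walk E s t a ((e,False) # w) b \<longleftrightarrow> e \<in> E \<and> t e = a \<and> is_walk E s t (s e) w b"

definition valid_path :: "'v set \<Rightarrow> 'e set \<Rightarrow> ('e \<Rightarrow> 'v) \<Rightarrow> ('e \<Rightarrow> 'v) \<Rightarrow> ('v,'e) path \<Rightarrow> bool" where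
  "valid_path V E s t p \<longleftrightarrow> (case p of (a,w,b) \<Rightarrow> a \<in> V \<and> b \<in> V \<and> is_walk E s t a w b)"

definition path_src :: "('v,'e) path \<Rightarrow> 'v" where "path_src p = fst p"
definition path_tgt :: "('v,'e) path \<Rightarrow> 'v" where "path_tgt p = snd (snd p)"

definition path_cat :: "('v,'e) path \<Rightarrow> ('v,'e) path \<Rightarrow> ('v,'e) path" where
  "path_cat p q = (fst p, fst (snd p) @ fst (snd q), snd (snd q))"

definition path_rev :: "('v,'e) path \<Rightarrow> ('v,'e) path" where
  "path_rev p = (snd (snd p), rev (map (\<lambda>(e,b). (e, \<not> b)) (fst (snd p))), fst p)"

inductive_set pcong ::
  "'v set \<Rightarrow> 'e set \<Rightarrow> ('e \<Rightarrow> 'v) \<Rightarrow> ('e \<Rightarrow> 'v) \<Rightarrow> (('v,'e) path \<times> ('v,'e) path) set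
     \<Rightarrow> (('v,'e) path \<times> ('v,'e) path) set"
  for V E s t R where
  prefl: "valid_path V E s t p \<Longrightarrow> (p, p) \<in> pcong V E s t R"
| psym: "(p, q) \<in> pcong V E s t R \<Longrightarrow> (q, p) \<in> pcong V E s t R"
| ptrans: "(p, q) \<in> pcong V E s t R \<Longrightarrow> (q, r) \<in> pcong V E s t R \<Longrightarrow> (p, r) \<in> pcong V E s t R"
| prel: "(p, q) \<in> R \<Longrightarrow> valid_path V E s t p \<Longrightarrow> valid_path V E s t q \<Longrightarrow>
         path_src p = path_src q \<Longrightarrow> path_tgt p = path_tgt q \<Longrightarrow> (p, q) \<in> pcong V E s t R"
| pcancel1: "e \<in> E \<Longrightarrow> s e \<in> V \<Longrightarrow> t e \<in> V \<Longrightarrow>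
         ((s e, [(e,True),(e,False)], s e), (s e, [], s e)) \<in> pcong V E s t R"
| pcancel2: "e \<in> E \<Longrightarrow> s e \<in> V \<Longrightarrow> t e \<in> V \<Longrightarrow>
         ((t e, [(e,False),(e,True)], t e), (t e, [], t e)) \<in> pcong V E s t R"
| pctx: "(p, q) \<in> pcong V E s t R \<Longrightarrow> valid_path V E s t u \<Longrightarrow> valid_path V E s t v \<Longrightarrow>
         path_tgt u = path_src p \<Longrightarrow> path_src v = path_tgt p \<Longrightarrow>
         (path_cat u (path_cat p v), path_cat u (path_cat q v)) \<in> pcong V E s t R"

definition pclass :: "'v set \<Rightarrow> 'e set \<Rightarrow> ('e \<Rightarrow> 'v) \<Rightarrow> ('e \<Rightarrow> 'v) \<Rightarrow>
    (('v,'e) path \<times> ('v,'e) path) set \<Rightarrow> ('v,'e) path \<Rightarrow> ('v,'e) path set" where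
  "pclass V E s t R p = pcong V E s t R `` {p}"

definition pres_gpd :: "'v set \<Rightarrow> 'e set \<Rightarrow> ('e \<Rightarrow> 'v) \<Rightarrow> ('e \<Rightarrow> 'v) \<Rightarrow>
    (('v,'e) path \<times> ('v,'e) path) set \<Rightarrow> ('v, ('v,'e) path set) gpd" where
  "pres_gpd V E s t R =
    \<lparr> Obj = V,
      Arr = {pclass V E s t R p | p. valid_path V E s t p},
      dom = (\<lambda>X. path_src (SOME p. p \<in> X)),
      cod = (\<lambda>X. path_tgt (SOME p. p \<in> X)),
      cmp = (\<lambda>Y X. pclass V E s t R (path_cat (SOME p. p \<in> X) (SOME q. q \<in> Y))),
      ide = (\<lambda>a. pclass V E s t R (a, [], a)),
      inv = (\<lambda>X. pclass V E s t R (path_rev (SOME p. p \<in> X))) \<rparr>"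

definition path_map :: "('v \<Rightarrow> 'w) \<Rightarrow> ('e \<Rightarrow> 'f) \<Rightarrow> ('v,'e) path \<Rightarrow> ('w,'f) path" where
  "path_map vm em p = (vm (fst p), map (\<lambda>(e,b). (em e, b)) (fst (snd p)), vm (snd (snd p)))"

definition pres_fun_arr :: "'w set \<Rightarrow> 'f set \<Rightarrow> ('f \<Rightarrow> 'w) \<Rightarrow> ('f \<Rightarrow> 'w) \<Rightarrow>
    (('w,'f) path \<times> ('w,'f) path) set \<Rightarrow> ('v \<Rightarrow> 'w) \<Rightarrow> ('e \<Rightarrow> 'f) \<Rightarrow>
    ('v,'e) path set \<Rightarrow> ('w,'f) path set" where
  "pres_fun_arr V' E' s' t' R' vm em X = pclass V' E' s' t' R' (path_map vm em (SOME p. p \<in> X))"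

text \<open>The poset of proper subsets of V, and the subposet B(V:U).\<close>
definition Bsets :: "nat set \<Rightarrow> nat set set" where
  "Bsets V = {X. X \<subset> V}"

definition Bsets_rel :: "nat set \<Rightarrow> nat set \<Rightarrow> nat set set" where
  "Bsets_rel V U = {X. U \<subseteq> X \<and> X \<subset> V}"

definition gpd_diagram :: "nat set set \<Rightarrow> (nat set \<Rightarrow> ('o,'m) gpd) \<Rightarrow>
    (nat set \<Rightarrow> nat set \<Rightarrow> 'o \<Rightarrow> 'o) \<Rightarrow> (nat set \<Rightarrow> nat set \<Rightarrow> 'm \<Rightarrow> 'm) \<Rightarrow> bool" where
  "gpd_diagram P Phi PhiO PhiM \<longleftrightarrow>
     (\<forall>X\<in>P. is_gpd (Phi X)) \<and>
     (\<forall>X\<in>P. \<forall>Y\<in>P. X \<subseteq> Y \<longrightarrow> is_functor (Phi X) (Phi Y) (PhiO X Y) (PhiM X Y)) \<and>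
     (\<forall>X\<in>P. (\<forall>x\<in>Obj (Phi X). PhiO X X x = x) \<and> (\<forall>f\<in>Arr (Phi X). PhiM X X f = f)) \<and>
     (\<forall>X\<in>P. \<forall>Y\<in>P. \<forall>Z\<in>P. X \<subseteq> Y \<longrightarrow> Y \<subseteq> Z \<longrightarrow>
        (\<forall>x\<in>Obj (Phi X). PhiO Y Z (PhiO X Y x) = PhiO X Z x) \<and>
        (\<forall>f\<in>Arr (Phi X). PhiM Y Z (PhiM X Y f) = PhiM X Z f))"

section \<open>The colimit of a diagram of groupoids (restricted to an index set I)\<close>

definition tot_obj :: "nat set set \<Rightarrow> (nat set \<Rightarrow> ('o,'m) gpd) \<Rightarrow> (nat set \<times> 'o) set" where
  "tot_obj I Phi = {(X, x) | X x. X \<in> I \<and> x \<in> Obj (Phi X)}"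

definition obj_step :: "nat set set \<Rightarrow> (nat set \<Rightarrow> ('o,'m) gpd) \<Rightarrow>
    (nat set \<Rightarrow> nat set \<Rightarrow> 'o \<Rightarrow> 'o) \<Rightarrow> ((nat set \<times> 'o) \<times> (nat set \<times> 'o)) set" where
  "obj_step I Phi PhiO = {((X, x), (Y, PhiO X Y x)) | X Y x. X \<in> I \<and> Y \<in> I \<and> X \<subseteq> Y \<and> x \<in> Obj (Phi X)}"

definition obj_eq :: "nat set set \<Rightarrow> (nat set \<Rightarrow> ('o,'m) gpd) \<Rightarrow>
    (nat set \<Rightarrow> nat set \<Rightarrow> 'o \<Rightarrow> 'o) \<Rightarrow> ((nat set \<times> 'o) \<times> (nat set \<times> 'o)) set" where
  "obj_eq I Phi PhiO = {(p, q). p \<in> tot_obj I Phi \<and>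
      (p, q) \<in> (obj_step I Phi PhiO \<union> (obj_step I Phi PhiO)\<inverse>)\<^sup>*}"

definition colim_V where
  "colim_V I Phi PhiO = tot_obj I Phi // obj_eq I Phi PhiO"

definition colim_E :: "nat set set \<Rightarrow> (nat set \<Rightarrow> ('o,'m) gpd) \<Rightarrow> (nat set \<times> 'm) set" where
  "colim_E I Phi = {(X, f) | X f. X \<in> I \<and> f \<in> Arr (Phi X)}"

definition colim_s where
  "colim_s Phi PhiO I = (\<lambda>(X, f). obj_eq I Phi PhiO `` {(X, dom (Phi X) f)})"

definition colim_t where
  "colim_t Phi PhiO I = (\<lambda>(X, f). obj_eq I Phi PhiO `` {(X, cod (Phi X) f)})"

text \<open>Relations: each Phi(X) \<rightarrow> colim is a functor (compositions and identities
  are respected) and the cocone is strictly compatible (f = Phi_{X,Y}(f)).\<close>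
definition colim_R :: "nat set set \<Rightarrow> (nat set \<Rightarrow> ('o,'m) gpd) \<Rightarrow>
    (nat set \<Rightarrow> nat set \<Rightarrow> 'o \<Rightarrow> 'o) \<Rightarrow> (nat set \<Rightarrow> nat set \<Rightarrow> 'm \<Rightarrow> 'm) \<Rightarrow>
    ((((nat set \<times> 'o) set), (nat set \<times> 'm)) path \<times> (((nat set \<times> 'o) set), (nat set \<times> 'm)) path) set" where
  "colim_R I Phi PhiO PhiM =
     (let c = (\<lambda>X x. obj_eq I Phi PhiO `` {(X, x)}) in
     {((c X (dom (Phi X) f), [((X, f), True), ((X, g), True)], c X (cod (Phi X) g)),
       (c X (dom (Phi X) f), [((X, cmp (Phi X) g f), True)], c X (cod (Phi X) g)))
       | X f g. X \<in> I \<and> f \<in> Arr (Phi X) \<and> g \<in> Arr (Phi X) \<and> cod (Phi X) f = dom (Phi X) g}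
     \<union> {((c X x, [((X, ide (Phi X) x), True)], c X x), (c X x, [], c X x))
       | X x. X \<in> I \<and> x \<in> Obj (Phi X)}
     \<union> {((c X (dom (Phi X) f), [((X, f), True)], c X (cod (Phi X) f)),
        (c X (dom (Phi X) f), [((Y, PhiM X Y f), True)], c X (cod (Phi X) f)))
       | X Y f. X \<in> I \<and> Y \<in> I \<and> X \<subseteq> Y \<and> f \<in> Arr (Phi X)})"

definition colim_gpd where
  "colim_gpd I Phi PhiO PhiM =
     pres_gpd (colim_V I Phi PhiO) (colim_E I Phi) (colim_s Phi PhiO I) (colim_t Phi PhiO I)
              (colim_R I Phi PhiO PhiM)"

definition canon_obj :: "(nat set \<Rightarrow> nat set \<Rightarrow> 'o \<Rightarrow> 'o) \<Rightarrow> nat set \<Rightarrow> (nat set \<times> 'o) set \<Rightarrow> 'o" where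
  "canon_obj PhiO V c = (case (SOME p. p \<in> c) of (X, x) \<Rightarrow> PhiO X V x)"

text \<open>Condition A^V_U: the canonical functor colim_{B(V:U)} Phi \<rightarrow> Phi(V) is injective on objects.\<close>
definition cond_A :: "(nat set \<Rightarrow> ('o,'m) gpd) \<Rightarrow> (nat set \<Rightarrow> nat set \<Rightarrow> 'o \<Rightarrow> 'o) \<Rightarrow>
    (nat set \<Rightarrow> nat set \<Rightarrow> 'm \<Rightarrow> 'm) \<Rightarrow> nat set \<Rightarrow> nat set \<Rightarrow> bool" where
  "cond_A Phi PhiO PhiM V U \<longleftrightarrow>
     inj_on (canon_obj PhiO V) (Obj (colim_gpd (Bsets_rel V U) Phi PhiO PhiM))"

section \<open>The 2-colimit: Grothendieck construction with all morphisms inverted\<close>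

definition tcolim_E :: "nat set set \<Rightarrow> (nat set \<Rightarrow> ('o,'m) gpd) \<Rightarrow>
    (nat set \<Rightarrow> nat set \<Rightarrow> 'o \<Rightarrow> 'o) \<Rightarrow> (nat set \<times> 'o \<times> nat set \<times> 'm) set" where
  "tcolim_E I Phi PhiO = {(X, x, Y, g) | X x Y g. X \<in> I \<and> Y \<in> I \<and> X \<subseteq> Y \<and>
      x \<in> Obj (Phi X) \<and> g \<in> Arr (Phi Y) \<and> dom (Phi Y) g = PhiO X Y x}"

definition tcolim_s :: "nat set \<times> 'o \<times> nat set \<times> 'm \<Rightarrow> nat set \<times> 'o" where
  "tcolim_s = (\<lambda>(X, x, Y, g). (X, x))"

definition tcolim_t :: "(nat set \<Rightarrow> ('o,'m) gpd) \<Rightarrow> nat set \<times> 'o \<times> nat set \<times> 'm \<Rightarrow> nat set \<times> 'o" where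
  "tcolim_t Phi = (\<lambda>(X, x, Y, g). (Y, cod (Phi Y) g))"

text \<open>Relations: composition and identities of the Grothendieck construction.\<close>
definition tcolim_R :: "nat set set \<Rightarrow> (nat set \<Rightarrow> ('o,'m) gpd) \<Rightarrow>
    (nat set \<Rightarrow> nat set \<Rightarrow> 'o \<Rightarrow> 'o) \<Rightarrow> (nat set \<Rightarrow> nat set \<Rightarrow> 'm \<Rightarrow> 'm) \<Rightarrow>
    ((nat set \<times> 'o, nat set \<times> 'o \<times> nat set \<times> 'm) path \<times> (nat set \<times> 'o, nat set \<times> 'o \<times> nat set \<times> 'm) path) set" where
  "tcolim_R I Phi PhiO PhiM =
     {(((X, x), [((X, x, Y, g), True), ((Y, cod (Phi Y) g, Z, h), True)], (Z, cod (Phi Z) h)),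
       ((X, x), [((X, x, Z, cmp (Phi Z) h (PhiM Y Z g)), True)], (Z, cod (Phi Z) h)))
       | X x Y g Z h. (X, x, Y, g) \<in> tcolim_E I Phi PhiO \<and> (Y, cod (Phi Y) g, Z, h) \<in> tcolim_E I Phi PhiO}
     \<union> {(((X, x), [((X, x, X, ide (Phi X) x), True)], (X, x)), ((X, x), [], (X, x)))
       | X x. X \<in> I \<and> x \<in> Obj (Phi X)}"

definition tcolim_gpd where
  "tcolim_gpd I Phi PhiO PhiM =
     pres_gpd (tot_obj I Phi) (tcolim_E I Phi PhiO) tcolim_s (tcolim_t Phi) (tcolim_R I Phi PhiO PhiM)"

definition delta_obj :: "nat set set \<Rightarrow> (nat set \<Rightarrow> ('o,'m) gpd) \<Rightarrow>
    (nat set \<Rightarrow> nat set \<Rightarrow> 'o \<Rightarrow> 'o) \<Rightarrow> nat set \<times> 'o \<Rightarrow> (nat set \<times> 'o) set" where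
  "delta_obj I Phi PhiO p = obj_eq I Phi PhiO `` {p}"

definition delta_edge :: "nat set \<times> 'o \<times> nat set \<times> 'm \<Rightarrow> nat set \<times> 'm" where
  "delta_edge = (\<lambda>(X, x, Y, g). (Y, g))"

definition delta_arr where
  "delta_arr I Phi PhiO PhiM =
     pres_fun_arr (colim_V I Phi PhiO) (colim_E I Phi) (colim_s Phi PhiO I) (colim_t Phi PhiO I)
       (colim_R I Phi PhiO PhiM) (delta_obj I Phi PhiO) delta_edge"

end

theory Submission
  imports Defs
begin


lemma is_walk_append:
  "is_walk E s t a (w1 @ w2) c \<longleftrightarrow> (\<exists>b. is_walk E s t a w1 b \<and> is_walk E s t b w2 c)"
proof (induction w1 arbitrary: a)
  case Nil thus ?case by simp
next
  case (Cons x w1) obtain e b where "x = (e,b)" by force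
  thus ?case using Cons by (cases b) auto
qed

definition flipw :: "('e \<times> bool) list \<Rightarrow> ('e \<times> bool) list" where
  "flipw w = rev (map (\<lambda>(e,b). (e, \<not> b)) w)"

lemma flipw_simps[simp]: "flipw [] = []" "flipw (x # w) = flipw w @ [(fst x, \<not> snd x)]"
  "flipw (w1 @ w2) = flipw w2 @ flipw w1"
  by (auto simp: flipw_def case_prod_beta comp_def)

lemma flipw_flipw[simp]: "flipw (flipw w) = w"
  by (induction w) auto

lemma is_walk_flip:
  "is_walk E s t a w b \<Longrightarrow> is_walk E s t b (flipw w) a"
proof (induction w arbitrary: a)
  case Nil thus ?case by simp
next
  case (Cons x w1) obtain e b where "x = (e,b)" by force
  thus ?case using Cons by (cases b) (auto simp: is_walk_append)
qed

lemma path_rev_alt: "path_rev p = (path_tgt p, flipw (fst (snd p)), path_src p)"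
  by (simp add: path_rev_def flipw_def path_src_def path_tgt_def)

definition idp :: "'v \<Rightarrow> ('v,'e) path" where "idp a = (a, [], a)"
definition ep :: "('e \<Rightarrow> 'v) \<Rightarrow> ('e \<Rightarrow> 'v) \<Rightarrow> 'e \<Rightarrow> ('v,'e) path" where
  "ep s t e = (s e, [(e,True)], t e)"

lemma path_simps[simp]:
  "path_src (a,w,b) = a" "path_tgt (a,w,b) = b"
  "path_cat (a,w,b) (c,w',d) = (a, w @ w', d)"
  "path_rev (a,w,b) = (b, flipw w, a)"
  "idp a = (a,[],a)" "ep s t e = (s e, [(e,True)], t e)"
  by (auto simp: path_src_def path_tgt_def path_cat_def path_rev_alt idp_def ep_def)

lemma path_cat_src_tgt[simp]: "path_src (path_cat p q) = path_src p" "path_tgt (path_cat p q) = path_tgt q"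
  "path_src (path_rev p) = path_tgt p" "path_tgt (path_rev p) = path_src p"
  by (auto simp: path_cat_def path_src_def path_tgt_def path_rev_def)

lemma path_rev_rev[simp]: "path_rev (path_rev p) = p"
  by (cases p) auto

lemma path_cat_assoc: "path_cat (path_cat p q) r = path_cat p (path_cat q r)"
  by (simp add: path_cat_def)

locale pg =
  fixes V :: "'v set" and E :: "'e set" and s t :: "'e \<Rightarrow> 'v"
    and R :: "(('v,'e) path \<times> ('v,'e) path) set"
  assumes st: "\<And>e. e \<in> E \<Longrightarrow> s e \<in> V \<and> t e \<in> V"
begin

abbreviation "pc \<equiv> pcong V E s t R"
abbreviation "vp \<equiv> valid_path V E s t"

lemma vp_simp: "vp (a,w,b) \<longleftrightarrow> a \<in> V \<and> b \<in> V \<and> is_walk E s t a w b"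
  by (simp add: valid_path_def)

lemma vp_cat: "vp p \<Longrightarrow> vp q \<Longrightarrow> path_tgt p = path_src q \<Longrightarrow> vp (path_cat p q)"
  by (cases p; cases q) (auto simp: vp_simp is_walk_append)

lemma vp_rev: "vp p \<Longrightarrow> vp (path_rev p)"
  by (cases p) (auto simp: vp_simp is_walk_flip)

lemma vp_idp: "a \<in> V \<Longrightarrow> vp (idp a)" by (simp add: vp_simp)

lemma vp_ep: "e \<in> E \<Longrightarrow> s e \<in> V \<Longrightarrow> t e \<in> V \<Longrightarrow> vp (ep s t e)" by (simp add: vp_simp)

lemma pc_valid: "(p,q) \<in> pc \<Longrightarrow> vp p \<and> vp q \<and> path_src p = path_src q \<and> path_tgt p = path_tgt q"
proof (induction rule: pcong.induct)
  case (pctx p q u v)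
  thus ?case by (simp add: vp_cat)
next
  case (pcancel1 e) thus ?case by (simp add: vp_simp)
next
  case (pcancel2 e) thus ?case by (simp add: vp_simp)
qed auto

lemma pc_refl: "vp p \<Longrightarrow> (p,p) \<in> pc" by (rule prefl)
lemma pc_sym: "(p,q) \<in> pc \<Longrightarrow> (q,p) \<in> pc" by (rule psym)
lemma pc_trans: "(p,q) \<in> pc \<Longrightarrow> (q,r) \<in> pc \<Longrightarrow> (p,r) \<in> pc" by (rule ptrans)

lemma cat_idp_left[simp]: "path_src p = a \<Longrightarrow> path_cat (a,[],a) p = p"
  by (cases p) auto
lemma cat_idp_right[simp]: "path_tgt p = a \<Longrightarrow> path_cat p (a,[],a) = p"
  by (cases p) auto

lemma pc_cat_right: "(p,q) \<in> pc \<Longrightarrow> vp v \<Longrightarrow> path_src v = path_tgt p \<Longrightarrow>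
   (path_cat p v, path_cat q v) \<in> pc"
proof -
  assume a: "(p,q) \<in> pc" "vp v" "path_src v = path_tgt p"
  have "(path_cat (idp (path_src p)) (path_cat p v), path_cat (idp (path_src p)) (path_cat q v)) \<in> pc"
    using a pc_valid[OF a(1)] by (intro pctx) (auto simp: vp_idp valid_path_def)
  moreover have "path_src q = path_src p" using pc_valid[OF a(1)] by simp
  ultimately show ?thesis
    by (cases p; cases q; cases v) auto
qed

lemma pc_cat_left: "(p,q) \<in> pc \<Longrightarrow> vp u \<Longrightarrow> path_tgt u = path_src p \<Longrightarrow>
   (path_cat u p, path_cat u q) \<in> pc"
proof -
  assume a: "(p,q) \<in> pc" "vp u" "path_tgt u = path_src p"
  have "(path_cat u (path_cat p (idp (path_tgt p))), path_cat u (path_cat q (idp (path_tgt p)))) \<in> pc"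
    using a pc_valid[OF a(1)] by (intro pctx) (auto simp: vp_idp valid_path_def)
  moreover have "path_tgt q = path_tgt p" using pc_valid[OF a(1)] by simp
  ultimately show ?thesis
    by (cases p; cases q; cases u) auto
qed

lemma pc_cat: "(p,p') \<in> pc \<Longrightarrow> (q,q') \<in> pc \<Longrightarrow> path_tgt p = path_src q \<Longrightarrow>
   (path_cat p q, path_cat p' q') \<in> pc"
proof -
  assume a: "(p,p') \<in> pc" "(q,q') \<in> pc" "path_tgt p = path_src q"
  have 1: "(path_cat p q, path_cat p' q) \<in> pc" using a pc_valid[OF a(2)] by (intro pc_cat_right) auto
  have 2: "(path_cat p' q, path_cat p' q') \<in> pc" using a pc_valid[OF a(1)] by (intro pc_cat_left) auto
  show ?thesis by (rule pc_trans[OF 1 2])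
qed

lemma pc_inv_edge:
  assumes "vp (a, [x], b)"
  shows "((a, [x, (fst x, \<not> snd x)], a), idp a) \<in> pc"
proof -
  obtain e bb where x: "x = (e,bb)" by force
  show ?thesis
  proof (cases bb)
    case True
    with assms x have "e \<in> E" "s e = a" "t e = b" "a \<in> V" "b \<in> V" by (auto simp: vp_simp)
    hence "((s e, [(e,True),(e,False)], s e), (s e, [], s e)) \<in> pc" by (intro pcancel1) auto
    thus ?thesis using x True \<open>s e = a\<close> by simp
  next
    case False
    with assms x have "e \<in> E" "t e = a" "s e = b" "a \<in> V" "b \<in> V" by (auto simp: vp_simp)
    hence "((t e, [(e,False),(e,True)], t e), (t e, [], t e)) \<in> pc" by (intro pcancel2) auto
    thus ?thesis using x False \<open>t e = a\<close> by simp
  qed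
qed

lemma pc_inv_right_aux: "vp (a,w,b) \<Longrightarrow> ((a, w @ flipw w, a), idp a) \<in> pc"
proof (induction w arbitrary: a b)
    case Nil thus ?case by (auto simp: vp_simp intro!: pc_refl)
  next
    case (Cons x w)
    from Cons.prems obtain c where c: "is_walk E s t a [x] c" "is_walk E s t c w b" "a \<in> V" "b \<in> V"
      using is_walk_append[of E s t a "[x]" w b] by (auto simp: vp_simp)
    have cV: "c \<in> V" using c(1) Cons.prems
      by (cases x; cases "snd x") (auto dest: st)
    have IH: "((c, w @ flipw w, c), idp c) \<in> pc" using Cons.IH c cV by (simp add: vp_simp)
    have vx: "vp (a,[x],c)" using c cV by (simp add: vp_simp)
    have vxr: "vp (c,[(fst x, \<not> snd x)],a)" using vp_rev[OF vx] by (simp add: flipw_def case_prod_beta)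
    have "(path_cat (a,[x],c) (path_cat (c, w @ flipw w, c) (c,[(fst x, \<not> snd x)],a)),
           path_cat (a,[x],c) (path_cat (idp c) (c,[(fst x, \<not> snd x)],a))) \<in> pc"
      by (rule pctx[OF IH vx vxr]) auto
    hence "((a, x # w @ flipw w @ [(fst x, \<not> snd x)], a), (a, [x, (fst x, \<not> snd x)], a)) \<in> pc"
      by simp
    moreover have "((a, [x, (fst x, \<not> snd x)], a), idp a) \<in> pc" by (rule pc_inv_edge[OF vx])
    ultimately show ?case by (simp only: append.simps append_assoc flipw_simps) (rule pc_trans)
qed

lemma pc_inv_right: assumes "vp p" shows "(path_cat p (path_rev p), idp (path_src p)) \<in> pc"
proof -
  obtain a w b where p: "p = (a,w,b)" by (cases p)
  from assms have "vp (a,w,b)" unfolding p .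
  from pc_inv_right_aux[OF this] show ?thesis unfolding p by simp
qed

lemma pc_inv_left: assumes "vp p" shows "(path_cat (path_rev p) p, idp (path_tgt p)) \<in> pc"
proof -
  obtain a w b where p: "p = (a,w,b)" by (cases p)
  from pc_inv_right[OF vp_rev[OF assms]] show ?thesis unfolding p by simp
qed

end


context pg begin

lemma pc_rev: assumes "(p,q) \<in> pc" shows "(path_rev p, path_rev q) \<in> pc"
proof -
  note v = pc_valid[OF assms]
  have vr: "vp (path_rev p)" "vp (path_rev q)" using v vp_rev by blast+
  have 1: "(path_cat (path_rev p) (path_cat q (path_rev q)), path_cat (path_rev p) (idp (path_src q))) \<in> pc"
    by (rule pc_cat_left[OF pc_inv_right vr(1)]) (use v in simp_all)
  have "(path_cat (path_rev p) p, path_cat (path_rev p) q) \<in> pc"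
    by (rule pc_cat_left[OF assms vr(1)]) simp
  hence 2: "(path_cat (path_cat (path_rev p) p) (path_rev q), path_cat (path_cat (path_rev p) q) (path_rev q)) \<in> pc"
    by (rule pc_cat_right[OF _ vr(2)]) (use v in simp)
  have 3: "(path_cat (path_cat (path_rev p) p) (path_rev q), path_cat (idp (path_tgt p)) (path_rev q)) \<in> pc"
    by (rule pc_cat_right[OF pc_inv_left vr(2)]) (use v in simp_all)
  have e1: "path_cat (path_rev p) (idp (path_src q)) = path_rev p" using v by simp
  have e2: "path_cat (idp (path_tgt p)) (path_rev q) = path_rev q" using v by simp
  have 4: "(path_rev p, path_cat (path_cat (path_rev p) q) (path_rev q)) \<in> pc"
    using pc_sym[OF 1] unfolding e1 path_cat_assoc .
  have 5: "(path_cat (path_cat (path_rev p) q) (path_rev q), path_rev q) \<in> pc"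
    using pc_trans[OF pc_sym[OF 2] 3] unfolding e2 .
  show ?thesis by (rule pc_trans[OF 4 5])
qed

lemma pc_cancel_mid:
  assumes "vp u" "vp f" "vp v" "path_tgt u = path_src f" "path_src v = path_src f"
  shows "(path_cat u (path_cat f (path_cat (path_rev f) v)), path_cat u v) \<in> pc"
proof -
  have "(path_cat (path_cat f (path_rev f)) v, path_cat (idp (path_src f)) v) \<in> pc"
    using assms by (intro pc_cat_right pc_inv_right) auto
  hence "(path_cat f (path_cat (path_rev f) v), v) \<in> pc"
    using assms by (simp add: path_cat_assoc cat_idp_left)
  thus ?thesis using assms by (intro pc_cat_left) auto
qed

lemma pc_cancel_mid':
  assumes "vp u" "vp f" "vp v" "path_tgt u = path_tgt f" "path_src v = path_tgt f"
  shows "(path_cat u (path_cat (path_rev f) (path_cat f v)), path_cat u v) \<in> pc"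
  using pc_cancel_mid[of u "path_rev f" v] assms by (simp add: vp_rev)

end

fun wsub :: "('e \<Rightarrow> ('w,'f) path) \<Rightarrow> ('e \<times> bool) list \<Rightarrow> ('f \<times> bool) list" where
  "wsub em [] = []"
| "wsub em (x # w) = (if snd x then fst (snd (em (fst x))) else flipw (fst (snd (em (fst x))))) @ wsub em w"

lemma wsub_append[simp]: "wsub em (w1 @ w2) = wsub em w1 @ wsub em w2"
  by (induction w1) auto

lemma wsub_flipw[simp]: "wsub em (flipw w) = flipw (wsub em w)"
  by (induction w) auto

definition psub :: "('v \<Rightarrow> 'w) \<Rightarrow> ('e \<Rightarrow> ('w,'f) path) \<Rightarrow> ('v,'e) path \<Rightarrow> ('w,'f) path" where
  "psub vm em p = (vm (path_src p), wsub em (fst (snd p)), vm (path_tgt p))"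

lemma psub_simp[simp]: "psub vm em (a,w,b) = (vm a, wsub em w, vm b)"
  by (simp add: psub_def)

lemma psub_cat[simp]: "psub vm em (path_cat p q) = path_cat (psub vm em p) (psub vm em q)"
  by (cases p; cases q) auto

lemma psub_rev[simp]: "psub vm em (path_rev p) = path_rev (psub vm em p)"
  by (cases p) auto

lemma psub_src_tgt[simp]: "path_src (psub vm em p) = vm (path_src p)" "path_tgt (psub vm em p) = vm (path_tgt p)"
  by (cases p; simp)+

lemma wsub_comp: "wsub em2 (wsub em1 w) = wsub (\<lambda>e. psub vm2 em2 (em1 e)) w"
proof (induction w)
  case (Cons x w)
  obtain a u b where "em1 (fst x) = (a,u,b)" by (cases "em1 (fst x)")
  thus ?case using Cons by auto
qed simp

lemma psub_comp: "psub vm2 em2 (psub vm1 em1 p) = psub (vm2 \<circ> vm1) (\<lambda>e. psub vm2 em2 (em1 e)) p"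
  by (cases p) (simp add: wsub_comp)

lemma path_map_psub: "path_map vm em p = psub vm (\<lambda>e. (vm (s e), [(em e, True)], vm (t e))) p"
proof -
  have "map (\<lambda>(e,b). (em e, b)) w = wsub (\<lambda>e. (vm (s e), [(em e, True)], vm (t e))) w" for w
    by (induction w) (auto simp: flipw_def)
  thus ?thesis by (cases p) (simp add: path_map_def)
qed

locale pmor = G: pg V E s t R + H: pg V' E' s' t' R'
  for V :: "'v set" and E :: "'e set" and s t :: "'e \<Rightarrow> 'v" and R
  and V' :: "'w set" and E' :: "'f set" and s' t' :: "'f \<Rightarrow> 'w" and R' +
  fixes vm :: "'v \<Rightarrow> 'w" and em :: "'e \<Rightarrow> ('w,'f) path"
  assumes vmV: "\<And>v. v \<in> V \<Longrightarrow> vm v \<in> V'"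
  and emv: "\<And>e. e \<in> E \<Longrightarrow> H.vp (em e) \<and> path_src (em e) = vm (s e) \<and> path_tgt (em e) = vm (t e)"
  and emR: "\<And>p q. (p,q) \<in> R \<Longrightarrow> G.vp p \<Longrightarrow> G.vp q \<Longrightarrow> path_src p = path_src q \<Longrightarrow>
              path_tgt p = path_tgt q \<Longrightarrow> (psub vm em p, psub vm em q) \<in> H.pc"
begin

lemma walk_sub: "is_walk E s t a w b \<Longrightarrow> a \<in> V \<Longrightarrow> is_walk E' s' t' (vm a) (wsub em w) (vm b)"
proof (induction w arbitrary: a)
  case Nil thus ?case by simp
next
  case (Cons x w)
  obtain e bb where x: "x = (e,bb)" by force
  show ?case
  proof (cases bb)
    case True
    with Cons.prems x have h: "e \<in> E" "s e = a" "is_walk E s t (t e) w b" by auto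
    obtain c u d where emd: "em e = (c,u,d)" by (cases "em e")
    from emv[OF h(1)] emd h have "is_walk E' s' t' (vm a) u (vm (t e))" by (auto simp: H.vp_simp)
    moreover have "is_walk E' s' t' (vm (t e)) (wsub em w) (vm b)" using Cons.IH h G.st by blast
    ultimately show ?thesis using x True emd by (simp add: is_walk_append, blast)
  next
    case False
    with Cons.prems x have h: "e \<in> E" "t e = a" "is_walk E s t (s e) w b" by auto
    obtain c u d where emd: "em e = (c,u,d)" by (cases "em e")
    from emv[OF h(1)] emd h have "is_walk E' s' t' (vm (s e)) u (vm a)" by (auto simp: H.vp_simp)
    hence "is_walk E' s' t' (vm a) (flipw u) (vm (s e))" by (rule is_walk_flip)
    moreover have "is_walk E' s' t' (vm (s e)) (wsub em w) (vm b)" using Cons.IH h G.st by blast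
    ultimately show ?thesis using x False emd by (simp add: is_walk_append, blast)
  qed
qed

lemma vp_sub: "G.vp p \<Longrightarrow> H.vp (psub vm em p)"
  by (cases p) (auto simp: G.vp_simp H.vp_simp vmV walk_sub)

lemma pc_sub: "(p,q) \<in> G.pc \<Longrightarrow> (psub vm em p, psub vm em q) \<in> H.pc"
proof (induction rule: pcong.induct)
  case (prefl p) thus ?case by (intro H.pc_refl vp_sub)
next
  case (psym p q) show ?case using psym.IH by (rule H.pc_sym)
next
  case (ptrans p q r) show ?case using ptrans.IH by (rule H.pc_trans)
next
  case (prel p q) thus ?case by (rule emR)
next
  case (pcancel1 e)
  obtain c u d where emd: "em e = (c,u,d)" by (cases "em e")
  have "(path_cat (em e) (path_rev (em e)), idp (path_src (em e))) \<in> H.pc"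
    using emv[OF pcancel1(1)] by (intro H.pc_inv_right) auto
  thus ?case using emd emv[OF pcancel1(1)] by simp
next
  case (pcancel2 e)
  obtain c u d where emd: "em e = (c,u,d)" by (cases "em e")
  have "(path_cat (path_rev (em e)) (em e), idp (path_tgt (em e))) \<in> H.pc"
    using emv[OF pcancel2(1)] by (intro H.pc_inv_left) auto
  thus ?case using emd emv[OF pcancel2(1)] by simp
next
  case (pctx p q u v)
  have "(path_cat (psub vm em u) (path_cat (psub vm em p) (psub vm em v)),
         path_cat (psub vm em u) (path_cat (psub vm em q) (psub vm em v))) \<in> H.pc"
    using pctx by (intro H.pc_cat_left H.pc_cat_right vp_sub) (auto dest: H.pc_valid intro: vp_sub)
  thus ?case by simp
qed

end


context pg begin

lemma conj_gen:
  assumes phi: "\<And>v. v \<in> V \<Longrightarrow> vp (\<phi> v) \<and> path_src (\<phi> v) = v \<and> path_tgt (\<phi> v) = vm v"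
  and emc: "\<And>e. e \<in> E \<Longrightarrow> (em e, path_cat (path_rev (\<phi> (s e))) (path_cat (ep s t e) (\<phi> (t e)))) \<in> pc"
  and "vp p"
  shows "(psub vm em p, path_cat (path_rev (\<phi> (path_src p))) (path_cat p (\<phi> (path_tgt p)))) \<in> pc"
proof -
  have "\<And>a b. vp (a,w,b) \<Longrightarrow> (psub vm em (a,w,b), path_cat (path_rev (\<phi> a)) (path_cat (a,w,b) (\<phi> b))) \<in> pc" for w
  proof (induction w)
    case Nil
    hence ab: "a = b" "a \<in> V" by (auto simp: vp_simp)
    have "(path_cat (path_rev (\<phi> a)) (\<phi> a), idp (path_tgt (\<phi> a))) \<in> pc"
      using phi[OF ab(2)] by (intro pc_inv_left) auto
    hence "(path_cat (path_rev (\<phi> a)) (path_cat (a,[],a) (\<phi> a)), psub vm em (a,[],a)) \<in> pc"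
      using phi[OF ab(2)] by simp
    thus ?case using ab by (simp add: pc_sym)
  next
    case (Cons x w)
    from Cons.prems obtain c where c: "is_walk E s t a [x] c" "is_walk E s t c w b" "a \<in> V" "b \<in> V"
      using is_walk_append[of E s t a "[x]" w b] by (auto simp: vp_simp)
    obtain e bb where x: "x = (e,bb)" by force
    have eE: "e \<in> E" using c(1) x by (cases bb) auto
    have cV: "c \<in> V" using c(1) x st[OF eE] by (cases bb) auto
    have vx: "vp (a,[x],c)" using c cV by (simp add: vp_simp)
    have vw: "vp (c,w,b)" using c cV by (simp add: vp_simp)
    have IH: "(psub vm em (c,w,b), path_cat (path_rev (\<phi> c)) (path_cat (c,w,b) (\<phi> b))) \<in> pc"
      using Cons.IH vw .
    have X: "(psub vm em (a,[x],c), path_cat (path_rev (\<phi> a)) (path_cat (a,[x],c) (\<phi> c))) \<in> pc"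
    proof (cases bb)
      case True
      hence h: "s e = a" "t e = c" using c(1) x by auto
      have es: "path_src (em e) = vm a" "path_tgt (em e) = vm c"
        using pc_valid[OF emc[OF eE]] phi[OF st[THEN conjunct1, OF eE]] phi[OF st[THEN conjunct2, OF eE]] h
        by auto
      then obtain u where "em e = (vm a, u, vm c)" by (cases "em e") simp
      hence "psub vm em (a,[x],c) = em e" using x True by simp
      thus ?thesis using emc[OF eE] h x True by simp
    next
      case False
      hence h: "s e = c" "t e = a" using c(1) x by auto
      have es: "path_src (em e) = vm c" "path_tgt (em e) = vm a"
        using pc_valid[OF emc[OF eE]] phi[OF st[THEN conjunct1, OF eE]] phi[OF st[THEN conjunct2, OF eE]] h
        by auto
      then obtain u where "em e = (vm c, u, vm a)" by (cases "em e") simp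
      hence "psub vm em (a,[x],c) = path_rev (em e)" using x False by simp
      moreover have "(path_rev (em e), path_rev (path_cat (path_rev (\<phi> c)) (path_cat (ep s t e) (\<phi> a)))) \<in> pc"
        using pc_rev[OF emc[OF eE]] h by simp
      moreover have "path_rev (path_cat (path_rev (\<phi> c)) (path_cat (ep s t e) (\<phi> a)))
          = path_cat (path_rev (\<phi> a)) (path_cat (a,[x],c) (\<phi> c))"
        using h x False phi[OF cV] phi[OF c(3)]
        by (cases "\<phi> a"; cases "\<phi> c") simp
      ultimately show ?thesis by simp
    qed
    have pa: "vp (\<phi> a)" "vp (\<phi> c)" "vp (\<phi> b)" using phi c cV by auto
    have "(path_cat (psub vm em (a,[x],c)) (psub vm em (c,w,b)),
           path_cat (path_cat (path_rev (\<phi> a)) (path_cat (a,[x],c) (\<phi> c)))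
                    (path_cat (path_rev (\<phi> c)) (path_cat (c,w,b) (\<phi> b)))) \<in> pc"
      by (rule pc_cat[OF X IH]) simp
    moreover have "(path_cat (path_cat (path_rev (\<phi> a)) (a,[x],c))
                      (path_cat (\<phi> c) (path_cat (path_rev (\<phi> c)) (path_cat (c,w,b) (\<phi> b)))),
                    path_cat (path_cat (path_rev (\<phi> a)) (a,[x],c)) (path_cat (c,w,b) (\<phi> b))) \<in> pc"
      using pa phi[OF cV] phi[OF c(3)] phi[OF c(4)] vx vw
      by (intro pc_cancel_mid) (auto intro!: vp_cat vp_rev)
    ultimately have "(psub vm em (a, x # w, b),
        path_cat (path_cat (path_rev (\<phi> a)) (a,[x],c)) (path_cat (c,w,b) (\<phi> b))) \<in> pc"
      by (simp add: path_cat_assoc pc_trans)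
    moreover have eq: "path_cat (a,[x],c) (path_cat (c,w,b) (\<phi> b)) = path_cat (a,x#w,b) (\<phi> b)"
      by (cases "\<phi> b") simp
    ultimately show ?case unfolding path_cat_assoc by simp
  qed
  thus ?thesis using assms(3) by (cases p) simp
qed

end


context pg begin

abbreviation "gp \<equiv> pres_gpd V E s t R"
abbreviation "cls \<equiv> pclass V E s t R"

lemma cls_mem: "vp p \<Longrightarrow> p \<in> cls p"
  by (simp add: pclass_def pc_refl)

lemma cls_eq_iff: assumes "vp p" "vp q" shows "cls p = cls q \<longleftrightarrow> (p,q) \<in> pc"
proof
  assume "cls p = cls q" hence "q \<in> cls p" using cls_mem[OF assms(2)] by simp
  thus "(p,q) \<in> pc" by (simp add: pclass_def)
next
  assume h: "(p,q) \<in> pc"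
  show "cls p = cls q"
  proof (rule set_eqI)
    fix r show "r \<in> cls p \<longleftrightarrow> r \<in> cls q"
      using h by (auto simp: pclass_def intro: pc_trans pc_sym)
  qed
qed

lemma some_cls: "vp p \<Longrightarrow> (p, SOME q. q \<in> cls p) \<in> pc"
proof -
  assume "vp p"
  hence "(SOME q. q \<in> cls p) \<in> cls p" using cls_mem by (metis someI)
  thus ?thesis by (simp add: pclass_def)
qed

lemma gp_Obj: "Obj gp = V" by (simp add: pres_gpd_def)
lemma gp_Arr: "Arr gp = {cls p | p. vp p}" by (simp add: pres_gpd_def)

lemma gp_dom: "vp p \<Longrightarrow> dom gp (cls p) = path_src p"
  using some_cls pc_valid by (fastforce simp: pres_gpd_def)
lemma gp_cod: "vp p \<Longrightarrow> cod gp (cls p) = path_tgt p"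
  using some_cls pc_valid by (fastforce simp: pres_gpd_def)
lemma gp_ide: "ide gp a = cls (a,[],a)" by (simp add: pres_gpd_def)

lemma gp_cmp: assumes "vp p" "vp q" "path_tgt p = path_src q"
  shows "cmp gp (cls q) (cls p) = cls (path_cat p q)"
proof -
  have sp: "(p, SOME r. r \<in> cls p) \<in> pc" and sq: "(q, SOME r. r \<in> cls q) \<in> pc"
    using some_cls assms by auto
  have "(path_cat p q, path_cat (SOME r. r \<in> cls p) (SOME r. r \<in> cls q)) \<in> pc"
    using pc_cat[OF sp sq] assms by simp
  hence "cls (path_cat p q) = cls (path_cat (SOME r. r \<in> cls p) (SOME r. r \<in> cls q))"
    using pc_valid cls_eq_iff by blast
  thus ?thesis by (simp add: pres_gpd_def)
qed

lemma gp_hom: "hom gp a b = {cls p | p. vp p \<and> path_src p = a \<and> path_tgt p = b}"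
  by (auto simp: hom_def gp_Arr gp_dom gp_cod)

end

context pmor begin

definition Fm where "Fm X = H.cls (psub vm em (SOME p. p \<in> X))"

lemma Fm_cls: "G.vp p \<Longrightarrow> Fm (G.cls p) = H.cls (psub vm em p)"
proof -
  assume v: "G.vp p"
  have "(psub vm em p, psub vm em (SOME q. q \<in> G.cls p)) \<in> H.pc"
    by (rule pc_sub[OF G.some_cls[OF v]])
  thus ?thesis unfolding Fm_def using H.cls_eq_iff H.pc_valid by blast
qed

lemma is_functor_Fm: "is_functor G.gp H.gp vm Fm"
  unfolding is_functor_def
proof (intro conjI ballI impI)
  fix a assume "a \<in> Obj G.gp" thus "vm a \<in> Obj H.gp" by (simp add: G.gp_Obj H.gp_Obj vmV)
next
  fix f assume "f \<in> Arr G.gp"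
  then obtain p where p: "G.vp p" "f = G.cls p" by (auto simp: G.gp_Arr)
  show "Fm f \<in> Arr H.gp" unfolding H.gp_Arr p(2) Fm_cls[OF p(1)] using vp_sub[OF p(1)] by blast
next
  fix f assume "f \<in> Arr G.gp"
  then obtain p where p: "G.vp p" "f = G.cls p" by (auto simp: G.gp_Arr)
  show "dom H.gp (Fm f) = vm (dom G.gp f)" unfolding p(2) Fm_cls[OF p(1)] H.gp_dom[OF vp_sub[OF p(1)]]
      G.gp_dom[OF p(1)] by (rule psub_src_tgt)
next
  fix f assume "f \<in> Arr G.gp"
  then obtain p where p: "G.vp p" "f = G.cls p" by (auto simp: G.gp_Arr)
  show "cod H.gp (Fm f) = vm (cod G.gp f)" unfolding p(2) Fm_cls[OF p(1)] H.gp_cod[OF vp_sub[OF p(1)]]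
      G.gp_cod[OF p(1)] by (rule psub_src_tgt)
next
  fix f g assume "f \<in> Arr G.gp" "g \<in> Arr G.gp" "cod G.gp f = dom G.gp g"
  then obtain p q where pq: "G.vp p" "f = G.cls p" "G.vp q" "g = G.cls q" "path_tgt p = path_src q"
    by (auto simp: G.gp_Arr G.gp_dom G.gp_cod)
  show "Fm (cmp G.gp g f) = cmp H.gp (Fm g) (Fm f)"
    using pq by (simp add: G.gp_cmp H.gp_cmp Fm_cls G.vp_cat vp_sub)
next
  fix a assume "a \<in> Obj G.gp"
  hence "G.vp (a,[],a)" by (simp add: G.gp_Obj G.vp_simp)
  thus "Fm (ide G.gp a) = ide H.gp (vm a)" by (simp add: G.gp_ide H.gp_ide Fm_cls)
qed

lemma equiv_crit:
  assumes faith: "\<And>p q. G.vp p \<Longrightarrow> G.vp q \<Longrightarrow> path_src p = path_src q \<Longrightarrow> path_tgt p = path_tgt q \<Longrightarrow>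
      (psub vm em p, psub vm em q) \<in> H.pc \<Longrightarrow> (p,q) \<in> G.pc"
  and full: "\<And>a b P. a \<in> V \<Longrightarrow> b \<in> V \<Longrightarrow> H.vp P \<Longrightarrow> path_src P = vm a \<Longrightarrow> path_tgt P = vm b \<Longrightarrow>
      \<exists>p. G.vp p \<and> path_src p = a \<and> path_tgt p = b \<and> (psub vm em p, P) \<in> H.pc"
  and surj: "\<And>y. y \<in> V' \<Longrightarrow> \<exists>x\<in>V. vm x = y"
  shows "is_equivalence G.gp H.gp vm Fm"
  unfolding is_equivalence_def
proof (intro conjI ballI is_functor_Fm)
  fix a b assume ab: "a \<in> Obj G.gp" "b \<in> Obj G.gp"
  show "bij_betw Fm (hom G.gp a b) (hom H.gp (vm a) (vm b))"
    unfolding bij_betw_def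
  proof
    show "inj_on Fm (hom G.gp a b)"
    proof (rule inj_onI)
      fix X Y assume "X \<in> hom G.gp a b" "Y \<in> hom G.gp a b" and e: "Fm X = Fm Y"
      then obtain p q where pq: "G.vp p" "X = G.cls p" "path_src p = a" "path_tgt p = b"
        "G.vp q" "Y = G.cls q" "path_src q = a" "path_tgt q = b" unfolding G.gp_hom by blast
      have "H.cls (psub vm em p) = H.cls (psub vm em q)" using e unfolding pq(2) pq(6) Fm_cls[OF pq(1)] Fm_cls[OF pq(5)] .
      hence "(psub vm em p, psub vm em q) \<in> H.pc" by (rule H.cls_eq_iff[OF vp_sub[OF pq(1)] vp_sub[OF pq(5)], THEN iffD1])
      hence "(p,q) \<in> G.pc" using faith pq(1,3,4,5,7,8) by simp
      thus "X = Y" unfolding pq(2) pq(6) by (rule G.cls_eq_iff[OF pq(1) pq(5), THEN iffD2])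
    qed
  next
    show "Fm ` hom G.gp a b = hom H.gp (vm a) (vm b)"
    proof
      show "Fm ` hom G.gp a b \<subseteq> hom H.gp (vm a) (vm b)"
      proof
        fix Z assume "Z \<in> Fm ` hom G.gp a b"
        then obtain p where p: "G.vp p" "path_src p = a" "path_tgt p = b" "Z = Fm (G.cls p)"
          unfolding G.gp_hom by blast
        show "Z \<in> hom H.gp (vm a) (vm b)" unfolding H.gp_hom p(4) Fm_cls[OF p(1)] using vp_sub[OF p(1)] p(2,3)
          by (intro CollectI exI[of _ "psub vm em p"]) (simp del: psub_simp)
      qed
    next
      show "hom H.gp (vm a) (vm b) \<subseteq> Fm ` hom G.gp a b"
      proof
        fix Z assume "Z \<in> hom H.gp (vm a) (vm b)"
        then obtain P where P: "H.vp P" "Z = H.cls P" "path_src P = vm a" "path_tgt P = vm b"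
          unfolding H.gp_hom by blast
        obtain p where p: "G.vp p" "path_src p = a" "path_tgt p = b" "(psub vm em p, P) \<in> H.pc"
          using full[OF _ _ P(1) P(3) P(4)] ab unfolding G.gp_Obj by blast
        have "Fm (G.cls p) = Z" unfolding P(2) Fm_cls[OF p(1)] by (rule H.cls_eq_iff[OF vp_sub[OF p(1)] P(1), THEN iffD2, OF p(4)])
        moreover have "G.cls p \<in> hom G.gp a b" using p unfolding G.gp_hom by (intro CollectI exI[of _ p]) simp
        ultimately show "Z \<in> Fm ` hom G.gp a b" by blast
      qed
    qed
  qed
next
  fix y assume "y \<in> Obj H.gp"
  then obtain x where x: "x \<in> V" "vm x = y" using surj unfolding H.gp_Obj by blast
  have "H.vp (y,[],y)" using x vmV by (auto simp: H.vp_simp)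
  hence "H.cls (y,[],y) \<in> hom H.gp (vm x) y" using x unfolding H.gp_hom by (intro CollectI exI[of _ "(y,[],y)"]) simp
  thus "\<exists>x\<in>Obj G.gp. hom H.gp (vm x) y \<noteq> {}" using x unfolding G.gp_Obj by blast
qed

end


lemma is_walk_mono: "is_walk E s t a w b \<Longrightarrow> E \<subseteq> E' \<Longrightarrow> is_walk E' s t a w b"
proof (induction w arbitrary: a)
  case (Cons x w)
  obtain e bb where x: "x = (e,bb)" by force
  show ?case using Cons x by (cases bb) (simp_all add: subset_iff)
qed simp

lemma valid_path_mono: "valid_path V E s t p \<Longrightarrow> V \<subseteq> V' \<Longrightarrow> E \<subseteq> E' \<Longrightarrow> valid_path V' E' s t p"
  by (cases p) (auto simp: valid_path_def intro: is_walk_mono)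

lemma pcong_mono: assumes "V \<subseteq> V'" "E \<subseteq> E'" "R \<subseteq> R'"
  shows "pcong V E s t R \<subseteq> pcong V' E' s t R'"
proof -
  have "(p,q) \<in> pcong V E s t R \<Longrightarrow> (p,q) \<in> pcong V' E' s t R'" for p q
  proof (induction rule: pcong.induct)
    case (prefl p) thus ?case using assms valid_path_mono by (metis pcong.prefl)
  next
    case (psym p q) show ?case using psym.IH by (rule pcong.psym)
  next
    case (ptrans p q r) show ?case using ptrans.IH by (rule pcong.ptrans)
  next
    case (prel p q) thus ?case using assms valid_path_mono[of V E s t _ V' E'] by (intro pcong.prel) auto
  next
    case (pcancel1 e) thus ?case using assms by (intro pcong.pcancel1) auto
  next
    case (pcancel2 e) thus ?case using assms by (intro pcong.pcancel2) auto
  next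
    case (pctx p q u v) thus ?case using assms valid_path_mono[of V E s t _ V' E'] by (intro pcong.pctx) auto
  qed
  thus ?thesis by auto
qed

context pg begin

lemma pc_cancel_l: "vp f \<Longrightarrow> vp v \<Longrightarrow> path_src v = path_src f \<Longrightarrow> (path_cat f (path_cat (path_rev f) v), v) \<in> pc"
  using pc_cancel_mid[of "idp (path_src f)" f v] by (simp add: vp_simp valid_path_def split: prod.splits)

lemma pc_cancel_l': "vp f \<Longrightarrow> vp v \<Longrightarrow> path_src v = path_tgt f \<Longrightarrow> (path_cat (path_rev f) (path_cat f v), v) \<in> pc"
  using pc_cancel_l[of "path_rev f" v] by (simp add: vp_rev)

end


lemma path_rev_cat[simp]: "path_rev (path_cat p q) = path_cat (path_rev q) (path_rev p)"
  by (cases p; cases q) simp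




locale dia =
  fixes n :: nat and Phi :: "nat set \<Rightarrow> ('o,'m) gpd"
    and PhiO :: "nat set \<Rightarrow> nat set \<Rightarrow> 'o \<Rightarrow> 'o"
    and PhiM :: "nat set \<Rightarrow> nat set \<Rightarrow> 'm \<Rightarrow> 'm"
  assumes diag: "gpd_diagram (Bsets {1..n}) Phi PhiO PhiM"
begin

abbreviation "B \<equiv> Bsets {1..n}"

lemma gpd: "X \<in> B \<Longrightarrow> is_gpd (Phi X)" using diag by (simp add: gpd_diagram_def)
lemma funct: "X \<in> B \<Longrightarrow> Y \<in> B \<Longrightarrow> X \<subseteq> Y \<Longrightarrow> is_functor (Phi X) (Phi Y) (PhiO X Y) (PhiM X Y)"
  using diag by (simp add: gpd_diagram_def)

lemma O_id: "X \<in> B \<Longrightarrow> x \<in> Obj (Phi X) \<Longrightarrow> PhiO X X x = x" using diag by (simp add: gpd_diagram_def)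
lemma M_id: "X \<in> B \<Longrightarrow> f \<in> Arr (Phi X) \<Longrightarrow> PhiM X X f = f" using diag by (simp add: gpd_diagram_def)
lemma O_comp: "X \<in> B \<Longrightarrow> Y \<in> B \<Longrightarrow> Z \<in> B \<Longrightarrow> X \<subseteq> Y \<Longrightarrow> Y \<subseteq> Z \<Longrightarrow> x \<in> Obj (Phi X) \<Longrightarrow>
   PhiO Y Z (PhiO X Y x) = PhiO X Z x" using diag unfolding gpd_diagram_def by blast

lemma obj_map: "X \<in> B \<Longrightarrow> Y \<in> B \<Longrightarrow> X \<subseteq> Y \<Longrightarrow> x \<in> Obj (Phi X) \<Longrightarrow> PhiO X Y x \<in> Obj (Phi Y)"
  using funct by (simp add: is_functor_def)
lemma arr_map: "X \<in> B \<Longrightarrow> Y \<in> B \<Longrightarrow> X \<subseteq> Y \<Longrightarrow> f \<in> Arr (Phi X) \<Longrightarrow>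
   PhiM X Y f \<in> Arr (Phi Y) \<and> dom (Phi Y) (PhiM X Y f) = PhiO X Y (dom (Phi X) f) \<and>
   cod (Phi Y) (PhiM X Y f) = PhiO X Y (cod (Phi X) f)"
  using funct by (simp add: is_functor_def)
lemma map_ide: "X \<in> B \<Longrightarrow> Y \<in> B \<Longrightarrow> X \<subseteq> Y \<Longrightarrow> x \<in> Obj (Phi X) \<Longrightarrow>
   PhiM X Y (ide (Phi X) x) = ide (Phi Y) (PhiO X Y x)"
  using funct by (simp add: is_functor_def)

lemma ide_arr: "X \<in> B \<Longrightarrow> x \<in> Obj (Phi X) \<Longrightarrow> ide (Phi X) x \<in> Arr (Phi X) \<and>
   dom (Phi X) (ide (Phi X) x) = x \<and> cod (Phi X) (ide (Phi X) x) = x"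
  using gpd by (simp add: is_gpd_def)
lemma dom_obj: "X \<in> B \<Longrightarrow> f \<in> Arr (Phi X) \<Longrightarrow> dom (Phi X) f \<in> Obj (Phi X) \<and> cod (Phi X) f \<in> Obj (Phi X)"
  using gpd by (simp add: is_gpd_def)
lemma cmp_arr: "X \<in> B \<Longrightarrow> f \<in> Arr (Phi X) \<Longrightarrow> g \<in> Arr (Phi X) \<Longrightarrow> cod (Phi X) f = dom (Phi X) g \<Longrightarrow>
   cmp (Phi X) g f \<in> Arr (Phi X) \<and> dom (Phi X) (cmp (Phi X) g f) = dom (Phi X) f \<and>
   cod (Phi X) (cmp (Phi X) g f) = cod (Phi X) g"
  using gpd unfolding is_gpd_def by blast
lemma cmp_ide_l: "X \<in> B \<Longrightarrow> f \<in> Arr (Phi X) \<Longrightarrow> cmp (Phi X) (ide (Phi X) (cod (Phi X) f)) f = f"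
  using gpd unfolding is_gpd_def by blast
lemma cmp_ide_r: "X \<in> B \<Longrightarrow> f \<in> Arr (Phi X) \<Longrightarrow> cmp (Phi X) f (ide (Phi X) (dom (Phi X) f)) = f"
  using gpd unfolding is_gpd_def by blast

abbreviation "TV I \<equiv> tot_obj I Phi"
abbreviation "TE I \<equiv> tcolim_E I Phi PhiO"
abbreviation "TR I \<equiv> tcolim_R I Phi PhiO PhiM"
abbreviation "TPC I \<equiv> pcong (TV I) (TE I) tcolim_s (tcolim_t Phi) (TR I)"
abbreviation "TVP I \<equiv> valid_path (TV I) (TE I) tcolim_s (tcolim_t Phi)"

lemma tot_obj_iff: "(X,x) \<in> TV I \<longleftrightarrow> X \<in> I \<and> x \<in> Obj (Phi X)"
  by (simp add: tot_obj_def)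

lemma TE_iff: "(X,x,Y,g) \<in> TE I \<longleftrightarrow> X \<in> I \<and> Y \<in> I \<and> X \<subseteq> Y \<and> x \<in> Obj (Phi X) \<and> g \<in> Arr (Phi Y) \<and>
   dom (Phi Y) g = PhiO X Y x"
  by (simp add: tcolim_E_def)

lemma ts_simp[simp]: "tcolim_s (X,x,Y,g) = (X,x)" by (simp add: tcolim_s_def)
lemma tt_simp[simp]: "tcolim_t Phi (X,x,Y,g) = (Y, cod (Phi Y) g)" by (simp add: tcolim_t_def)

lemma pgT: assumes "I \<subseteq> B" shows "pg (TV I) (TE I) tcolim_s (tcolim_t Phi)"
proof
  fix e assume "e \<in> TE I"
  then obtain X x Y g where e: "e = (X,x,Y,g)" "(X,x,Y,g) \<in> TE I" by (cases e) auto
  hence h: "X \<in> I" "Y \<in> I" "x \<in> Obj (Phi X)" "g \<in> Arr (Phi Y)" by (simp_all add: TE_iff)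
  have "Y \<in> B" using h assms by blast
  hence "cod (Phi Y) g \<in> Obj (Phi Y)" using dom_obj h by blast
  thus "tcolim_s e \<in> TV I \<and> tcolim_t Phi e \<in> TV I" using e h by (simp add: tot_obj_iff)
qed

lemma TV_mono: "I \<subseteq> J \<Longrightarrow> TV I \<subseteq> TV J" unfolding tot_obj_def by blast
lemma TE_mono: "I \<subseteq> J \<Longrightarrow> TE I \<subseteq> TE J" unfolding tcolim_E_def by blast

lemma TR_mono: assumes "I \<subseteq> J" shows "TR I \<subseteq> TR J"
proof
  fix r assume "r \<in> TR I"
  hence "r \<in> {(((X, x), [((X, x, Y, g), True), ((Y, cod (Phi Y) g, Z, h), True)], (Z, cod (Phi Z) h)),
       ((X, x), [((X, x, Z, cmp (Phi Z) h (PhiM Y Z g)), True)], (Z, cod (Phi Z) h)))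
       | X x Y g Z h. (X, x, Y, g) \<in> TE I \<and> (Y, cod (Phi Y) g, Z, h) \<in> TE I} \<or>
      r \<in> {(((X, x), [((X, x, X, ide (Phi X) x), True)], (X, x)), ((X, x), [], (X, x)))
       | X x. X \<in> I \<and> x \<in> Obj (Phi X)}" unfolding tcolim_R_def Un_iff .
  thus "r \<in> TR J"
  proof
    assume "r \<in> {(((X, x), [((X, x, Y, g), True), ((Y, cod (Phi Y) g, Z, h), True)], (Z, cod (Phi Z) h)),
       ((X, x), [((X, x, Z, cmp (Phi Z) h (PhiM Y Z g)), True)], (Z, cod (Phi Z) h)))
       | X x Y g Z h. (X, x, Y, g) \<in> TE I \<and> (Y, cod (Phi Y) g, Z, h) \<in> TE I}"
    then obtain X x Y g Z h where r: "r = (((X, x), [((X, x, Y, g), True), ((Y, cod (Phi Y) g, Z, h), True)], (Z, cod (Phi Z) h)),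
       ((X, x), [((X, x, Z, cmp (Phi Z) h (PhiM Y Z g)), True)], (Z, cod (Phi Z) h)))"
      "(X, x, Y, g) \<in> TE I" "(Y, cod (Phi Y) g, Z, h) \<in> TE I" by blast
    hence "(X, x, Y, g) \<in> TE J" "(Y, cod (Phi Y) g, Z, h) \<in> TE J" using TE_mono[OF assms] by blast+
    thus ?thesis unfolding tcolim_R_def r(1) by (intro UnI1 CollectI exI conjI) auto
  next
    assume "r \<in> {(((X, x), [((X, x, X, ide (Phi X) x), True)], (X, x)), ((X, x), [], (X, x)))
       | X x. X \<in> I \<and> x \<in> Obj (Phi X)}"
    then obtain X x where r: "r = (((X, x), [((X, x, X, ide (Phi X) x), True)], (X, x)), ((X, x), [], (X, x)))"
      "X \<in> I" "x \<in> Obj (Phi X)" by blast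
    hence "X \<in> J" using assms by blast
    thus ?thesis unfolding tcolim_R_def r(1) using r by (intro UnI2 CollectI exI conjI) auto
  qed
qed

lemma TPC_mono: "I \<subseteq> J \<Longrightarrow> TPC I \<subseteq> TPC J"
  by (rule pcong_mono[OF TV_mono TE_mono TR_mono])

lemma TVP_mono: "I \<subseteq> J \<Longrightarrow> TVP I p \<Longrightarrow> TVP J p"
proof -
  assume a: "I \<subseteq> J" "TVP I p"
  have "TV I \<subseteq> TV J" "TE I \<subseteq> TE J" using a(1) TV_mono TE_mono by blast+
  thus ?thesis using valid_path_mono[OF a(2)] by blast
qed

lemma T_rel_comp:
  assumes I: "I \<subseteq> B" and e1: "(X,x,Y,g) \<in> TE I" and e2: "(Y, cod (Phi Y) g, Z, h) \<in> TE I"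
  shows "(path_cat (ep tcolim_s (tcolim_t Phi) (X,x,Y,g)) (ep tcolim_s (tcolim_t Phi) (Y, cod (Phi Y) g, Z, h)),
          ep tcolim_s (tcolim_t Phi) (X,x,Z, cmp (Phi Z) h (PhiM Y Z g))) \<in> TPC I"
proof -
  interpret T: pg "TV I" "TE I" tcolim_s "tcolim_t Phi" "TR I" by (rule pgT[OF I])
  have XYZ: "X \<in> B" "Y \<in> B" "Z \<in> B" "X \<subseteq> Y" "Y \<subseteq> Z" "x \<in> Obj (Phi X)" "g \<in> Arr (Phi Y)" "h \<in> Arr (Phi Z)"
    "dom (Phi Y) g = PhiO X Y x" "dom (Phi Z) h = PhiO Y Z (cod (Phi Y) g)"
    using e1 e2 I by (auto simp: TE_iff)
  have pg: "PhiM Y Z g \<in> Arr (Phi Z)" "dom (Phi Z) (PhiM Y Z g) = PhiO X Z x"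
    "cod (Phi Z) (PhiM Y Z g) = PhiO Y Z (cod (Phi Y) g)"
    using arr_map[of Y Z g] XYZ O_comp[of X Y Z x] by auto
  have c: "cmp (Phi Z) h (PhiM Y Z g) \<in> Arr (Phi Z)" "dom (Phi Z) (cmp (Phi Z) h (PhiM Y Z g)) = PhiO X Z x"
    "cod (Phi Z) (cmp (Phi Z) h (PhiM Y Z g)) = cod (Phi Z) h"
    using cmp_arr[of Z "PhiM Y Z g" h] pg XYZ by auto
  have e3: "(X,x,Z, cmp (Phi Z) h (PhiM Y Z g)) \<in> TE I"
    using e1 e2 c XYZ by (auto simp: TE_iff)
  have vE: "T.vp (ep tcolim_s (tcolim_t Phi) e)" if "e \<in> TE I" for e
    using T.st[OF that] that by (intro T.vp_ep) auto
  have R: "(((X, x), [((X, x, Y, g), True), ((Y, cod (Phi Y) g, Z, h), True)], (Z, cod (Phi Z) h)),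
       ((X, x), [((X, x, Z, cmp (Phi Z) h (PhiM Y Z g)), True)], (Z, cod (Phi Z) h))) \<in> TR I"
    unfolding tcolim_R_def using e1 e2 by (intro UnI1 CollectI exI conjI) auto
  have eq1: "path_cat (ep tcolim_s (tcolim_t Phi) (X,x,Y,g)) (ep tcolim_s (tcolim_t Phi) (Y, cod (Phi Y) g, Z, h))
     = ((X, x), [((X, x, Y, g), True), ((Y, cod (Phi Y) g, Z, h), True)], (Z, cod (Phi Z) h))" by simp
  have eq2: "ep tcolim_s (tcolim_t Phi) (X,x,Z, cmp (Phi Z) h (PhiM Y Z g))
     = ((X, x), [((X, x, Z, cmp (Phi Z) h (PhiM Y Z g)), True)], (Z, cod (Phi Z) h))" using c by simp
  show ?thesis unfolding eq1 eq2
    by (rule pcong.prel[OF R]) (use T.vp_cat[OF vE[OF e1] vE[OF e2]] vE[OF e3] eq1 eq2 in simp_all)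
qed


definition iota :: "nat set \<Rightarrow> nat set \<Rightarrow> 'o \<Rightarrow> nat set \<times> 'o \<times> nat set \<times> 'm" where
  "iota X Y x = (X, x, Y, ide (Phi Y) (PhiO X Y x))"

definition ip :: "nat set \<Rightarrow> nat set \<Rightarrow> 'o \<Rightarrow> (nat set \<times> 'o, nat set \<times> 'o \<times> nat set \<times> 'm) path" where
  "ip X Y x = ((X,x), [(iota X Y x, True)], (Y, PhiO X Y x))"

definition iotas :: "nat set set \<Rightarrow> (nat set \<times> 'o \<times> nat set \<times> 'm) set" where
  "iotas I = {iota X Y x | X Y x. X \<in> I \<and> Y \<in> I \<and> X \<subseteq> Y \<and> x \<in> Obj (Phi X)}"

lemma iotas_mono: "I \<subseteq> J \<Longrightarrow> iotas I \<subseteq> iotas J" unfolding iotas_def by blast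

lemma iota_in: "X \<in> I \<Longrightarrow> Y \<in> I \<Longrightarrow> X \<subseteq> Y \<Longrightarrow> x \<in> Obj (Phi X) \<Longrightarrow> iota X Y x \<in> iotas I"
  unfolding iotas_def by blast

lemma iota_TE: assumes "I \<subseteq> B" "X \<in> I" "Y \<in> I" "X \<subseteq> Y" "x \<in> Obj (Phi X)"
  shows "iota X Y x \<in> TE I"
proof -
  have "X \<in> B" "Y \<in> B" using assms by blast+
  hence "PhiO X Y x \<in> Obj (Phi Y)" using obj_map assms by blast
  thus ?thesis using ide_arr[of Y "PhiO X Y x"] assms \<open>Y \<in> B\<close> by (simp add: iota_def TE_iff)
qed

lemma iota_t: assumes "Y \<in> B" "X \<in> B" "X \<subseteq> Y" "x \<in> Obj (Phi X)"
  shows "tcolim_t Phi (iota X Y x) = (Y, PhiO X Y x)" "tcolim_s (iota X Y x) = (X,x)"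
  using ide_arr[of Y "PhiO X Y x"] obj_map[of X Y x] assms by (simp_all add: iota_def)

lemma ip_ep: assumes "Y \<in> B" "X \<in> B" "X \<subseteq> Y" "x \<in> Obj (Phi X)"
  shows "ep tcolim_s (tcolim_t Phi) (iota X Y x) = ip X Y x"
  using iota_t[OF assms] by (simp add: ip_def)

lemma ip_valid: assumes "I \<subseteq> B" "X \<in> I" "Y \<in> I" "X \<subseteq> Y" "x \<in> Obj (Phi X)"
  shows "TVP I (ip X Y x)"
proof -
  have "X \<in> B" "Y \<in> B" using assms by blast+
  thus ?thesis using iota_TE[OF assms] iota_t[of Y X x] assms obj_map[of X Y x]
    by (simp add: ip_def valid_path_def tot_obj_iff)
qed

lemma ip_src_tgt[simp]: "path_src (ip X Y x) = (X,x)" "path_tgt (ip X Y x) = (Y, PhiO X Y x)"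
  by (simp_all add: ip_def)

lemma ip_edges: "fst ` set (fst (snd (ip X Y x))) = {iota X Y x}" by (simp add: ip_def)

lemma ip_tri: assumes I: "I \<subseteq> B" and XYZ: "X \<in> I" "Y \<in> I" "Z \<in> I" "X \<subseteq> Y" "Y \<subseteq> Z" "x \<in> Obj (Phi X)"
  shows "(path_cat (ip X Y x) (ip Y Z (PhiO X Y x)), ip X Z x) \<in> TPC I"
proof -
  have B: "X \<in> B" "Y \<in> B" "Z \<in> B" using XYZ I by blast+
  define y where "y = PhiO X Y x"
  define z where "z = PhiO Y Z y"
  have y: "y \<in> Obj (Phi Y)" using obj_map B XYZ y_def by blast
  have z: "z \<in> Obj (Phi Z)" using obj_map B XYZ y z_def by blast
  have zx: "PhiO X Z x = z" using O_comp B XYZ y_def z_def by simp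
  have e1: "(X,x,Y,ide (Phi Y) y) \<in> TE I" using iota_TE[OF I XYZ(1,2,4,6)] by (simp add: iota_def y_def)
  have cy: "cod (Phi Y) (ide (Phi Y) y) = y" using ide_arr B y by blast
  have e2: "(Y, cod (Phi Y) (ide (Phi Y) y), Z, ide (Phi Z) z) \<in> TE I"
    using iota_TE[OF I XYZ(2,3,5) y] cy by (simp add: iota_def z_def)
  have m: "PhiM Y Z (ide (Phi Y) y) = ide (Phi Z) z" using map_ide B XYZ y z_def by simp
  have c0: "cmp (Phi Z) (ide (Phi Z) (cod (Phi Z) (ide (Phi Z) z))) (ide (Phi Z) z) = ide (Phi Z) z"
    by (rule cmp_ide_l[OF B(3)]) (use ide_arr[OF B(3) z] in simp)
  have c: "cmp (Phi Z) (ide (Phi Z) z) (ide (Phi Z) z) = ide (Phi Z) z"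
    using c0 ide_arr[OF B(3) z] by simp
  have cz: "cod (Phi Z) (ide (Phi Z) z) = z" using ide_arr B z by blast
  from T_rel_comp[OF I e1 e2] show ?thesis
    unfolding m c cy by (simp add: ip_def iota_def cz y_def[symmetric] z_def[symmetric] zx)
qed

lemma ip_id: assumes I: "I \<subseteq> B" and "X \<in> I" "x \<in> Obj (Phi X)"
  shows "(ip X X x, ((X,x),[],(X,x))) \<in> TPC I"
proof -
  interpret T: pg "TV I" "TE I" tcolim_s "tcolim_t Phi" "TR I" by (rule pgT[OF I])
  have B: "X \<in> B" using assms by blast
  have o: "PhiO X X x = x" using O_id B assms by simp
  have R: "(((X, x), [((X, x, X, ide (Phi X) x), True)], (X, x)), ((X, x), [], (X, x))) \<in> TR I"
    unfolding tcolim_R_def using assms by (intro UnI2 CollectI exI conjI) auto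
  have v: "T.vp (ip X X x)" using ip_valid[OF I assms(2) assms(2) _ assms(3)] by simp
  show ?thesis using v unfolding ip_def iota_def o
    by (intro pcong.prel[OF R[unfolded]]) (auto simp: T.vp_simp tot_obj_iff assms)
qed

lemma ip_comp_edge: assumes I: "I \<subseteq> B" and e: "(X,x,Y,g) \<in> TE I"
  shows "(path_cat (ip X Y x) (ep tcolim_s (tcolim_t Phi) (Y, PhiO X Y x, Y, g)), ep tcolim_s (tcolim_t Phi) (X,x,Y,g)) \<in> TPC I"
proof -
  have h: "X \<in> I" "Y \<in> I" "X \<subseteq> Y" "x \<in> Obj (Phi X)" "g \<in> Arr (Phi Y)" "dom (Phi Y) g = PhiO X Y x"
    using e by (simp_all add: TE_iff)
  have B: "X \<in> B" "Y \<in> B" using h I by blast+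
  define y where "y = PhiO X Y x"
  have y: "y \<in> Obj (Phi Y)" using obj_map B h y_def by blast
  have e1: "(X,x,Y,ide (Phi Y) y) \<in> TE I" using iota_TE[OF I h(1,2,3,4)] by (simp add: iota_def y_def)
  have cy: "cod (Phi Y) (ide (Phi Y) y) = y" using ide_arr B y by blast
  have e2: "(Y, cod (Phi Y) (ide (Phi Y) y), Y, g) \<in> TE I"
    using e y B O_id[OF B(2) y] h cy unfolding y_def by (simp add: TE_iff)
  have m: "PhiM Y Y (ide (Phi Y) y) = ide (Phi Y) y" using M_id B ide_arr y by blast
  have c: "cmp (Phi Y) g (ide (Phi Y) y) = g"
    using cmp_ide_r[of Y g] h B y_def by simp
  from T_rel_comp[OF I e1 e2] show ?thesis
    unfolding m c cy by (simp add: ip_def iota_def y_def[symmetric])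
qed

definition good :: "nat set set \<Rightarrow> (nat set \<times> 'o \<Rightarrow> (nat set \<times> 'o, nat set \<times> 'o \<times> nat set \<times> 'm) path) \<Rightarrow> bool" where
  "good I \<theta> \<longleftrightarrow> (\<forall>p\<in>TV I. TVP I (\<theta> p) \<and> path_src (\<theta> p) = p \<and> fst ` set (fst (snd (\<theta> p))) \<subseteq> iotas I) \<and>
     (\<forall>X Y x. X \<in> I \<longrightarrow> Y \<in> I \<longrightarrow> X \<subseteq> Y \<longrightarrow> x \<in> Obj (Phi X) \<longrightarrow>
        (path_cat (ip X Y x) (\<theta> (Y, PhiO X Y x)), \<theta> (X,x)) \<in> TPC I)"

definition Im :: "nat \<Rightarrow> nat set set" where "Im m = Bsets_rel {1..n} {m+1..n}"

lemma Im_B: "Im m \<subseteq> B" by (auto simp: Im_def Bsets_rel_def Bsets_def)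
lemma Im_n: "Im n = B" by (simp add: Im_def Bsets_rel_def Bsets_def)
lemma Im_0: "Im 0 = {}" by (auto simp: Im_def Bsets_rel_def Bsets_def)


definition INJ :: "nat \<Rightarrow> bool" where
  "INJ m \<longleftrightarrow> (\<forall>p\<in>TV (Bsets_rel ({1..n}-{m}) {m+1..n}). \<forall>q\<in>TV (Bsets_rel ({1..n}-{m}) {m+1..n}).
     PhiO (fst p) ({1..n}-{m}) (snd p) = PhiO (fst q) ({1..n}-{m}) (snd q) \<longrightarrow>
     (p,q) \<in> obj_eq (Bsets_rel ({1..n}-{m}) {m+1..n}) Phi PhiO)"

end




locale stp = dia n Phi PhiO PhiM
  for n and Phi :: "nat set \<Rightarrow> ('o,'m) gpd" and PhiO PhiM +
  fixes m :: nat and thT :: "nat set \<times> 'o \<Rightarrow> (nat set \<times> 'o, nat set \<times> 'o \<times> nat set \<times> 'm) path"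
  assumes m1: "1 \<le> m" and mn: "m \<le> n" and gT: "good (Im (m-1)) thT" and inj: "INJ m"
begin

abbreviation "L \<equiv> Im m"
abbreviation "T \<equiv> Im (m-1)"
abbreviation "tp \<equiv> {1..n} - {m}"
abbreviation "A \<equiv> Bsets_rel tp {m+1..n}"

lemma L_iff: "X \<in> L \<longleftrightarrow> {m+1..n} \<subseteq> X \<and> X \<subseteq> {1..n} \<and> X \<noteq> {1..n}"
  by (auto simp: Im_def Bsets_rel_def)
lemma T_iff0: "X \<in> Im (m - Suc 0) \<longleftrightarrow> {m..n} \<subseteq> X \<and> X \<subseteq> {1..n} \<and> X \<noteq> {1..n}"
  using m1 by (auto simp: Im_def Bsets_rel_def)
lemma T_iff: "X \<in> T \<longleftrightarrow> {m..n} \<subseteq> X \<and> X \<subseteq> {1..n} \<and> X \<noteq> {1..n}"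
  using T_iff0 by simp
lemma A_iff: "X \<in> A \<longleftrightarrow> {m+1..n} \<subseteq> X \<and> X \<subseteq> tp \<and> X \<noteq> tp"
  by (auto simp: Bsets_rel_def)

lemma mn_int: "{m..n} = insert m {m+1..n}" using mn by auto

lemma L_B: "L \<subseteq> B" by (rule Im_B)
lemma T_L: "T \<subseteq> L"
proof
  fix X assume "X \<in> T" thus "X \<in> L" unfolding L_iff using T_iff mn_int by auto
qed
lemma T_B: "T \<subseteq> B" using T_L L_B by blast
lemma A_L: "A \<subseteq> L"
proof
  fix X assume "X \<in> A" hence h: "{m+1..n} \<subseteq> X" "X \<subseteq> tp" "X \<noteq> tp" unfolding A_iff by auto
  have "m \<in> {1..n}" using m1 mn by auto
  thus "X \<in> L" unfolding L_iff using h by auto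
qed
lemma A_B: "A \<subseteq> B" using A_L L_B by blast
lemma s2: "X \<in> L \<Longrightarrow> m \<in> X \<Longrightarrow> X \<in> T" unfolding L_iff T_iff mn_int by blast
lemma s3: "X \<in> L \<Longrightarrow> m \<notin> X \<Longrightarrow> X \<subseteq> tp" unfolding L_iff by blast
lemma tp_L: "tp \<in> L"
proof -
  have mm: "m \<in> {1..n}" using m1 mn by simp
  have 1: "{m+1..n} \<subseteq> {1..n} - {m}" using m1 by (simp add: subset_iff)
  have 2: "{1..n} - {m} \<noteq> {1..n}" using mm by blast
  show ?thesis unfolding L_iff using 1 2 by blast
qed
lemma tp_B: "tp \<in> B" using tp_L L_B by blast
lemma s7: "X \<in> T \<Longrightarrow> m \<in> X" unfolding T_iff mn_int by blast
lemma tp_T: "tp \<notin> T" using s7 by blast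
lemma s5: "X \<in> L \<Longrightarrow> X \<subseteq> tp \<Longrightarrow> X \<noteq> tp \<Longrightarrow> insert m X \<in> T"
proof -
  assume a: "X \<in> L" "X \<subseteq> tp" "X \<noteq> tp"
  hence h: "{m+1..n} \<subseteq> X" unfolding L_iff by auto
  have mm: "m \<in> {1..n}" using m1 mn by auto
  have "insert m X \<noteq> {1..n}"
  proof
    assume "insert m X = {1..n}"
    hence "tp \<subseteq> X" by auto
    thus False using a by auto
  qed
  thus ?thesis unfolding T_iff using h mn_int mm a(2) by auto
qed
lemma s5A: "X \<in> L \<Longrightarrow> X \<subseteq> tp \<Longrightarrow> X \<noteq> tp \<Longrightarrow> X \<in> A"
  unfolding L_iff A_iff by auto
lemma s6: "X \<in> A \<Longrightarrow> X \<in> L \<and> X \<subseteq> tp \<and> X \<noteq> tp"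
proof -
  assume a: "X \<in> A" hence "X \<in> L" using A_L by blast
  thus ?thesis using a unfolding A_iff by blast
qed
lemma s8: "X \<in> T \<Longrightarrow> Y \<in> L \<Longrightarrow> X \<subseteq> Y \<Longrightarrow> Y \<in> T" using s7 s2 by blast
lemma tp_sub: "tp \<subseteq> Y \<Longrightarrow> Y \<in> L \<Longrightarrow> Y = tp"
proof -
  assume a: "tp \<subseteq> Y" "Y \<in> L"
  have "m \<notin> Y"
  proof
    assume "m \<in> Y" hence "{1..n} \<subseteq> Y" using a by auto
    thus False using a unfolding L_iff by auto
  qed
  thus ?thesis using a s3 by blast
qed

sublocale LL: pg "TV L" "TE L" tcolim_s "tcolim_t Phi" "TR L" by (rule pgT[OF L_B])

lemma gT_valid: assumes p: "p \<in> TV T"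
  shows "TVP L (thT p) \<and> path_src (thT p) = p \<and> fst ` set (fst (snd (thT p))) \<subseteq> iotas L"
proof -
  have "\<forall>p\<in>TV T. TVP T (thT p) \<and> path_src (thT p) = p \<and> fst ` set (fst (snd (thT p))) \<subseteq> iotas T"
    using gT unfolding good_def by (rule conjunct1)
  hence g: "TVP T (thT p)" "path_src (thT p) = p" "fst ` set (fst (snd (thT p))) \<subseteq> iotas T"
    using p by auto
  show ?thesis using TVP_mono[OF T_L g(1)] g(2) g(3) iotas_mono[OF T_L] by blast
qed

lemma gT_edge: "X \<in> T \<Longrightarrow> Y \<in> T \<Longrightarrow> X \<subseteq> Y \<Longrightarrow> x \<in> Obj (Phi X) \<Longrightarrow>
   (path_cat (ip X Y x) (thT (Y, PhiO X Y x)), thT (X,x)) \<in> TPC L"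
proof -
  assume a: "X \<in> T" "Y \<in> T" "X \<subseteq> Y" "x \<in> Obj (Phi X)"
  have "\<forall>X Y x. X \<in> T \<longrightarrow> Y \<in> T \<longrightarrow> X \<subseteq> Y \<longrightarrow> x \<in> Obj (Phi X) \<longrightarrow>
        (path_cat (ip X Y x) (thT (Y, PhiO X Y x)), thT (X,x)) \<in> TPC T"
    using gT unfolding good_def by (rule conjunct2)
  hence "(path_cat (ip X Y x) (thT (Y, PhiO X Y x)), thT (X,x)) \<in> TPC T" using a by blast
  thus ?thesis using TPC_mono[OF T_L] by blast
qed

definition hh where "hh X x = path_cat (ip X (insert m X) x) (thT (insert m X, PhiO X (insert m X) x))"
definition gg where "gg X x = path_cat (path_rev (ip X tp x)) (hh X x)"

lemma hh_props: assumes "X \<in> L" "X \<subseteq> tp" "X \<noteq> tp" "x \<in> Obj (Phi X)"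
  shows "TVP L (hh X x) \<and> path_src (hh X x) = (X,x) \<and> fst ` set (fst (snd (hh X x))) \<subseteq> iotas L"
proof -
  have Xm: "insert m X \<in> T" using s5 assms by blast
  hence XmL: "insert m X \<in> L" using T_L by blast
  have B: "X \<in> B" "insert m X \<in> B" using assms XmL L_B by blast+
  have x': "PhiO X (insert m X) x \<in> Obj (Phi (insert m X))" using obj_map B assms by blast
  have th: "TVP L (thT (insert m X, PhiO X (insert m X) x)) \<and> path_src (thT (insert m X, PhiO X (insert m X) x)) = (insert m X, PhiO X (insert m X) x)
    \<and> fst ` set (fst (snd (thT (insert m X, PhiO X (insert m X) x)))) \<subseteq> iotas L"
    using gT_valid Xm x' by (simp add: tot_obj_iff)
  have ipv: "TVP L (ip X (insert m X) x)" using ip_valid[OF L_B assms(1) XmL _ assms(4)] by blast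
  have io: "iota X (insert m X) x \<in> iotas L" using iota_in[OF assms(1) XmL _ assms(4)] by blast
  have v: "TVP L (hh X x)" unfolding hh_def using th by (intro LL.vp_cat[OF ipv]) simp_all
  have sr: "path_src (hh X x) = (X,x)" unfolding hh_def by simp
  obtain a w b where tw: "thT (insert m X, PhiO X (insert m X) x) = (a,w,b)" by (cases "thT (insert m X, PhiO X (insert m X) x)")
  have "fst ` set (fst (snd (hh X x))) = insert (iota X (insert m X) x) (fst ` set w)"
    unfolding hh_def tw by (simp add: ip_def)
  moreover have "fst ` set w \<subseteq> iotas L" using th tw by simp
  ultimately show ?thesis using v sr io by simp
qed


lemma hh_edge: assumes X: "X \<in> L" and Y: "Y \<in> L" and XY: "X \<subseteq> Y" and Ytp: "Y \<subseteq> tp" "Y \<noteq> tp"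
  and x: "x \<in> Obj (Phi X)"
  shows "(path_cat (ip X Y x) (hh Y (PhiO X Y x)), hh X x) \<in> TPC L"
proof -
  have Xtp: "X \<subseteq> tp" "X \<noteq> tp" using XY Ytp by auto
  define Xm where "Xm = insert m X"
  define Ym where "Ym = insert m Y"
  have XmT: "Xm \<in> T" using s5[OF X Xtp] Xm_def by simp
  have YmT: "Ym \<in> T" using s5[OF Y Ytp] Ym_def by simp
  have XmL: "Xm \<in> L" and YmL: "Ym \<in> L" using XmT YmT T_L by blast+
  have sub: "X \<subseteq> Xm" "Y \<subseteq> Ym" "Xm \<subseteq> Ym" "X \<subseteq> Ym" using XY Xm_def Ym_def by auto
  have B: "X \<in> B" "Y \<in> B" "Xm \<in> B" "Ym \<in> B" using X Y XmL YmL L_B by blast+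
  define y where "y = PhiO X Y x"
  define x' where "x' = PhiO X Xm x"
  define z where "z = PhiO X Ym x"
  have y: "y \<in> Obj (Phi Y)" using obj_map B XY x y_def by blast
  have x': "x' \<in> Obj (Phi Xm)" using obj_map B sub x x'_def by blast
  have z: "z \<in> Obj (Phi Ym)" using obj_map B sub x z_def by blast
  have e1: "PhiO Y Ym y = z" using O_comp[OF B(1,2,4) XY sub(2) x] y_def z_def by simp
  have e2: "PhiO Xm Ym x' = z" using O_comp[OF B(1,3,4) sub(1) sub(3) x] x'_def z_def by simp
  define \<Theta> where "\<Theta> = thT (Ym, z)"
  have th: "TVP L \<Theta>" "path_src \<Theta> = (Ym,z)" using gT_valid[of "(Ym,z)"] YmT z \<Theta>_def by (auto simp: tot_obj_iff)
  have t1: "(path_cat (ip X Y x) (ip Y Ym y), ip X Ym x) \<in> TPC L"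
    using ip_tri[OF L_B X Y YmL XY sub(2) x] y_def by simp
  have t2: "(path_cat (ip X Xm x) (ip Xm Ym x'), ip X Ym x) \<in> TPC L"
    using ip_tri[OF L_B X XmL YmL sub(1) sub(3) x] x'_def by simp
  have t3: "(path_cat (ip Xm Ym x') \<Theta>, thT (Xm, x')) \<in> TPC L"
    using gT_edge[OF XmT YmT sub(3) x'] e2 \<Theta>_def by simp
  have s1: "(path_cat (path_cat (ip X Y x) (ip Y Ym y)) \<Theta>, path_cat (ip X Ym x) \<Theta>) \<in> TPC L"
    by (rule LL.pc_cat_right[OF t1 th(1)]) (simp add: th(2) e1[symmetric])
  have s2: "(path_cat (path_cat (ip X Xm x) (ip Xm Ym x')) \<Theta>, path_cat (ip X Ym x) \<Theta>) \<in> TPC L"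
    by (rule LL.pc_cat_right[OF t2 th(1)]) (simp add: th(2) e2[symmetric] z_def)
  have ipv: "TVP L (ip X Xm x)" using ip_valid[OF L_B X XmL sub(1) x] .
  have s3: "(path_cat (ip X Xm x) (path_cat (ip Xm Ym x') \<Theta>), path_cat (ip X Xm x) (thT (Xm, x'))) \<in> TPC L"
    by (rule LL.pc_cat_left[OF t3 ipv]) (simp add: x'_def)
  have "(path_cat (ip X Y x) (hh Y y), path_cat (ip X Ym x) \<Theta>) \<in> TPC L"
    using s1 unfolding path_cat_assoc hh_def Ym_def[symmetric] e1 \<Theta>_def .
  moreover have "(path_cat (ip X Ym x) \<Theta>, hh X x) \<in> TPC L"
    using LL.pc_trans[OF LL.pc_sym[OF s2] s3[folded path_cat_assoc]] unfolding hh_def Xm_def[symmetric] x'_def[symmetric] .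
  ultimately show ?thesis unfolding y_def by (rule LL.pc_trans)
qed

lemma gg_valid: assumes "X \<in> A" "x \<in> Obj (Phi X)"
  shows "TVP L (gg X x) \<and> path_src (gg X x) = (tp, PhiO X tp x) \<and> fst ` set (fst (snd (gg X x))) \<subseteq> iotas L"
proof -
  have X: "X \<in> L" "X \<subseteq> tp" "X \<noteq> tp" using s6[OF assms(1)] by auto
  have h: "TVP L (hh X x)" "path_src (hh X x) = (X,x)" "fst ` set (fst (snd (hh X x))) \<subseteq> iotas L"
    using hh_props[OF X assms(2)] by auto
  have ipv: "TVP L (ip X tp x)" using ip_valid[OF L_B X(1) tp_L X(2) assms(2)] .
  have io: "iota X tp x \<in> iotas L" using iota_in[OF X(1) tp_L X(2) assms(2)] .
  have v: "TVP L (gg X x)" unfolding gg_def using h by (intro LL.vp_cat LL.vp_rev ipv) simp_all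
  obtain a w b where hw: "hh X x = (a,w,b)" by (cases "hh X x")
  have "fst ` set (fst (snd (gg X x))) = insert (iota X tp x) (fst ` set w)"
    unfolding gg_def hw by (simp add: ip_def)
  thus ?thesis using v h hw io by (simp add: gg_def)
qed

lemma gg_step: assumes X: "X \<in> A" and Y: "Y \<in> A" and XY: "X \<subseteq> Y" and x: "x \<in> Obj (Phi X)"
  shows "(gg X x, gg Y (PhiO X Y x)) \<in> TPC L"
proof -
  have Xs: "X \<in> L" "X \<subseteq> tp" "X \<noteq> tp" and Ys: "Y \<in> L" "Y \<subseteq> tp" "Y \<noteq> tp" using s6 X Y by auto
  have B: "X \<in> B" "Y \<in> B" using Xs Ys L_B by blast+
  define y where "y = PhiO X Y x"
  have y: "y \<in> Obj (Phi Y)" using obj_map B XY x y_def by blast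
  have yt: "PhiO Y tp y = PhiO X tp x" using O_comp[OF B tp_B XY Ys(2) x] y_def by simp
  have c3: "(path_cat (ip X Y x) (hh Y y), hh X x) \<in> TPC L" using hh_edge[OF Xs(1) Ys(1) XY Ys(2,3) x] y_def by simp
  have tri: "(path_cat (ip X Y x) (ip Y tp y), ip X tp x) \<in> TPC L"
    using ip_tri[OF L_B Xs(1) Ys(1) tp_L XY Ys(2) x] y_def by simp
  have r: "(path_rev (ip X tp x), path_cat (path_rev (ip Y tp y)) (path_rev (ip X Y x))) \<in> TPC L"
    using LL.pc_rev[OF LL.pc_sym[OF tri]] by simp
  have hY: "TVP L (hh Y y)" "path_src (hh Y y) = (Y,y)" using hh_props[OF Ys y] by auto
  have ipXY: "TVP L (ip X Y x)" using ip_valid[OF L_B Xs(1) Ys(1) XY x] .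
  have hX: "path_src (hh X x) = (X,x)" using hh_props[OF Xs x] by auto
  have ipYt: "TVP L (ip Y tp y)" using ip_valid[OF L_B Ys(1) tp_L Ys(2) y] .
  have "(gg X x, path_cat (path_cat (path_rev (ip Y tp y)) (path_rev (ip X Y x))) (path_cat (ip X Y x) (hh Y y))) \<in> TPC L"
    unfolding gg_def by (rule LL.pc_cat[OF r LL.pc_sym[OF c3]]) (simp add: hX)
  moreover have "(path_cat (path_rev (ip Y tp y)) (path_cat (path_rev (ip X Y x)) (path_cat (ip X Y x) (hh Y y))),
                  path_cat (path_rev (ip Y tp y)) (hh Y y)) \<in> TPC L"
    by (rule LL.pc_cancel_mid'[OF LL.vp_rev[OF ipYt] ipXY hY(1)]) (use hY(2) in \<open>simp_all add: y_def[symmetric]\<close>)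
  ultimately show ?thesis unfolding path_cat_assoc gg_def y_def[symmetric] by (rule LL.pc_trans)
qed


lemma gg_eq: assumes "(p,q) \<in> obj_eq A Phi PhiO"
  shows "q \<in> TV A \<and> (gg (fst p) (snd p), gg (fst q) (snd q)) \<in> TPC L"
proof -
  have p: "p \<in> TV A" and pq: "(p,q) \<in> (obj_step A Phi PhiO \<union> (obj_step A Phi PhiO)\<inverse>)\<^sup>*"
    using assms unfolding obj_eq_def by blast+
  from pq show ?thesis
  proof (induction rule: rtrancl_induct)
    case base
    obtain X x where px: "p = (X,x)" by (cases p)
    have "X \<in> A" "x \<in> Obj (Phi X)" using p px by (auto simp: tot_obj_iff)
    hence "TVP L (gg X x)" using gg_valid by blast
    thus ?case using p px LL.pc_refl by simp
  next
    case (step q r)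
    have st: "\<And>X Y x. X \<in> A \<Longrightarrow> Y \<in> A \<Longrightarrow> X \<subseteq> Y \<Longrightarrow> x \<in> Obj (Phi X) \<Longrightarrow>
        (X,x) \<in> TV A \<and> (Y, PhiO X Y x) \<in> TV A \<and> (gg X x, gg Y (PhiO X Y x)) \<in> TPC L"
    proof -
      fix X Y x assume a: "X \<in> A" "Y \<in> A" "X \<subseteq> Y" "x \<in> Obj (Phi X)"
      have "X \<in> B" "Y \<in> B" using a A_B by blast+
      hence "PhiO X Y x \<in> Obj (Phi Y)" using obj_map a by blast
      thus "(X,x) \<in> TV A \<and> (Y, PhiO X Y x) \<in> TV A \<and> (gg X x, gg Y (PhiO X Y x)) \<in> TPC L"
        using a gg_step by (simp add: tot_obj_iff)
    qed
    from step.hyps(2) show ?case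
    proof
      assume "(q,r) \<in> obj_step A Phi PhiO"
      then obtain X Y x where qr: "q = (X,x)" "r = (Y, PhiO X Y x)" "X \<in> A" "Y \<in> A" "X \<subseteq> Y" "x \<in> Obj (Phi X)"
        unfolding obj_step_def by blast
      have "(gg (fst p) (snd p), gg X x) \<in> TPC L" using step.IH qr(1) by simp
      hence "(gg (fst p) (snd p), gg Y (PhiO X Y x)) \<in> TPC L" using st[OF qr(3-6)] LL.pc_trans by blast
      thus ?thesis using st[OF qr(3-6)] qr(2) by simp
    next
      assume "(q,r) \<in> (obj_step A Phi PhiO)\<inverse>"
      then obtain X Y x where qr: "r = (X,x)" "q = (Y, PhiO X Y x)" "X \<in> A" "Y \<in> A" "X \<subseteq> Y" "x \<in> Obj (Phi X)"
        unfolding obj_step_def by blast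
      have "(gg (fst p) (snd p), gg Y (PhiO X Y x)) \<in> TPC L" using step.IH qr(2) by simp
      hence "(gg (fst p) (snd p), gg X x) \<in> TPC L" using st[OF qr(3-6)] LL.pc_trans LL.pc_sym by blast
      thus ?thesis using st[OF qr(3-6)] qr(1) by simp
    qed
  qed
qed

definition th where
  "th p = (if fst p \<in> T then thT p else if fst p \<noteq> tp then hh (fst p) (snd p)
     else if (\<exists>q\<in>TV A. PhiO (fst q) tp (snd q) = snd p)
       then gg (fst (SOME q. q \<in> TV A \<and> PhiO (fst q) tp (snd q) = snd p)) (snd (SOME q. q \<in> TV A \<and> PhiO (fst q) tp (snd q) = snd p))
     else (p, [], p))"

lemma th_T: "X \<in> T \<Longrightarrow> th (X,x) = thT (X,x)" by (simp add: th_def)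
lemma th_h: "X \<notin> T \<Longrightarrow> X \<noteq> tp \<Longrightarrow> th (X,x) = hh X x" by (simp add: th_def)
lemma th_ex: assumes "\<exists>q\<in>TV A. PhiO (fst q) tp (snd q) = x"
  obtains a z where "(a,z) \<in> TV A" "PhiO a tp z = x" "th (tp,x) = gg a z"
proof -
  let ?q = "SOME q. q \<in> TV A \<and> PhiO (fst q) tp (snd q) = x"
  have q: "?q \<in> TV A \<and> PhiO (fst ?q) tp (snd ?q) = x" using assms by (metis (mono_tags, lifting) someI_ex)
  have "th (tp,x) = gg (fst ?q) (snd ?q)" using assms tp_T by (simp add: th_def)
  thus ?thesis using q that[of "fst ?q" "snd ?q"] by simp
qed
lemma th_nex: "\<not> (\<exists>q\<in>TV A. PhiO (fst q) tp (snd q) = x) \<Longrightarrow> th (tp,x) = ((tp,x),[],(tp,x))"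
  using tp_T by (simp add: th_def)

lemma th_valid: assumes p: "p \<in> TV L"
  shows "TVP L (th p) \<and> path_src (th p) = p \<and> fst ` set (fst (snd (th p))) \<subseteq> iotas L"
proof -
  obtain X x where px: "p = (X,x)" by (cases p)
  have X: "X \<in> L" "x \<in> Obj (Phi X)" using p px by (auto simp: tot_obj_iff)
  show ?thesis
  proof (cases "X \<in> T")
    case True
    thus ?thesis using gT_valid[of p] px X th_T by (simp add: tot_obj_iff)
  next
    case nT: False
    show ?thesis
    proof (cases "X = tp")
      case False
      have "m \<notin> X" using nT s2 X by blast
      hence "X \<subseteq> tp" using s3 X by blast
      thus ?thesis using hh_props[OF X(1) _ False X(2)] th_h[OF nT False] px by simp
    next
      case True
      show ?thesis
      proof (cases "\<exists>q\<in>TV A. PhiO (fst q) tp (snd q) = x")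
        case True
        then obtain a z where az: "(a,z) \<in> TV A" "PhiO a tp z = x" "th (tp,x) = gg a z" by (rule th_ex)
        thus ?thesis using gg_valid[of a z] px \<open>X = tp\<close> by (simp add: tot_obj_iff)
      next
        case False
        have "TVP L ((tp,x),[],(tp,x))" using p px \<open>X = tp\<close> by (simp add: LL.vp_simp)
        thus ?thesis using th_nex[OF False] px \<open>X = tp\<close> by simp
      qed
    qed
  qed
qed


lemma th_edge: assumes X: "X \<in> L" and Y: "Y \<in> L" and XY: "X \<subseteq> Y" and x: "x \<in> Obj (Phi X)"
  shows "(path_cat (ip X Y x) (th (Y, PhiO X Y x)), th (X,x)) \<in> TPC L"
proof -
  have B: "X \<in> B" "Y \<in> B" using X Y L_B by blast+
  define y where "y = PhiO X Y x"
  have y: "y \<in> Obj (Phi Y)" using obj_map B XY x y_def by blast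
  show ?thesis
  proof (cases "X \<in> T")
    case True
    hence YT: "Y \<in> T" using s8 Y XY by blast
    thus ?thesis using gT_edge[OF True YT XY x] th_T[OF True] th_T[OF YT] by simp
  next
    case nXT: False
    have mX: "m \<notin> X" using nXT s2 X by blast
    hence Xtp: "X \<subseteq> tp" using s3 X by blast
    show ?thesis
    proof (cases "X = tp")
      case True
      hence Yt: "Y = tp" using tp_sub XY Y by blast
      have yx: "y = x" using y_def O_id B x True Yt by simp
      have "(path_cat (ip X X x) (th (X,x)), path_cat ((X,x),[],(X,x)) (th (X,x))) \<in> TPC L"
        using th_valid[of "(X,x)"] X x O_id[OF B(1) x] by (intro LL.pc_cat_right ip_id[OF L_B X x]) (auto simp: tot_obj_iff)
      moreover have "path_cat ((X,x),[],(X,x)) (th (X,x)) = th (X,x)"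
        using th_valid[of "(X,x)"] X x by (simp add: tot_obj_iff)
      ultimately show ?thesis using True Yt y_def yx by simp
    next
      case Xntp: False
      have hX: "TVP L (hh X x)" "path_src (hh X x) = (X,x)" using hh_props[OF X Xtp Xntp x] by auto
      have thX: "th (X,x) = hh X x" using th_h[OF nXT Xntp] .
      show ?thesis
      proof (cases "Y \<in> T")
        case YT: True
        define Xm where "Xm = insert m X"
        have XmT: "Xm \<in> T" using s5[OF X Xtp Xntp] Xm_def by simp
        have XmL: "Xm \<in> L" using XmT T_L by blast
        have XmY: "Xm \<subseteq> Y" "X \<subseteq> Xm" using s7[OF YT] XY Xm_def by auto
        have BXm: "Xm \<in> B" using XmL L_B by blast
        define x' where "x' = PhiO X Xm x"
        have x': "x' \<in> Obj (Phi Xm)" using obj_map B BXm XmY x x'_def by blast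
        have e: "PhiO Xm Y x' = y" using O_comp[OF B(1) BXm B(2) XmY(2) XmY(1) x] x'_def y_def by simp
        have tri: "(path_cat (ip X Xm x) (ip Xm Y x'), ip X Y x) \<in> TPC L"
          using ip_tri[OF L_B X XmL Y XmY(2) XmY(1) x] x'_def by simp
        have ge: "(path_cat (ip Xm Y x') (thT (Y, y)), thT (Xm,x')) \<in> TPC L"
          using gT_edge[OF XmT YT XmY(1) x'] e by simp
        have Th: "TVP L (thT (Y,y))" "path_src (thT (Y,y)) = (Y,y)" using gT_valid[of "(Y,y)"] YT y
          by (auto simp: tot_obj_iff)
        have ipv: "TVP L (ip X Xm x)" using ip_valid[OF L_B X XmL XmY(2) x] .
        have 1: "(path_cat (path_cat (ip X Xm x) (ip Xm Y x')) (thT (Y,y)), path_cat (ip X Y x) (thT (Y,y))) \<in> TPC L"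
          by (rule LL.pc_cat_right[OF tri Th(1)]) (simp add: Th(2) e)
        have 2: "(path_cat (ip X Xm x) (path_cat (ip Xm Y x') (thT (Y,y))), path_cat (ip X Xm x) (thT (Xm,x'))) \<in> TPC L"
          by (rule LL.pc_cat_left[OF ge ipv]) (simp add: x'_def)
        have "(path_cat (ip X Y x) (thT (Y,y)), hh X x) \<in> TPC L"
          using LL.pc_trans[OF LL.pc_sym[OF 1] 2[folded path_cat_assoc]] unfolding hh_def Xm_def[symmetric] x'_def[symmetric] .
        thus ?thesis using thX th_T[OF YT] y_def by simp
      next
        case nYT: False
        show ?thesis
        proof (cases "Y = tp")
          case False
          have "m \<notin> Y" using nYT s2 Y by blast
          hence Ytp: "Y \<subseteq> tp" using s3 Y by blast
          thus ?thesis using hh_edge[OF X Y XY Ytp False x] thX th_h[OF nYT False] by simp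
        next
          case Yt: True
          have XA: "X \<in> A" using s5A[OF X Xtp Xntp] .
          have ex: "\<exists>q\<in>TV A. PhiO (fst q) tp (snd q) = y"
            using XA x Yt y_def by (intro bexI[of _ "(X,x)"]) (simp_all add: tot_obj_iff)
          obtain a z where az: "(a,z) \<in> TV A" "PhiO a tp z = y" "th (tp,y) = gg a z" using th_ex[OF ex] .
          have XxA: "(X,x) \<in> TV A" using XA x by (simp add: tot_obj_iff)
          have "(((X,x),(a,z)) \<in> obj_eq A Phi PhiO)"
            using inj XxA az(1,2) y_def Yt unfolding INJ_def by simp
          hence geq: "(gg X x, gg a z) \<in> TPC L" using gg_eq by fastforce
          have ipv: "TVP L (ip X tp x)" using ip_valid[OF L_B X tp_L Xtp x] .
          have 1: "(path_cat (ip X tp x) (gg a z), path_cat (ip X tp x) (gg X x)) \<in> TPC L"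
            using gg_valid[OF XA x] LL.pc_valid[OF geq] by (intro LL.pc_cat_left[OF LL.pc_sym[OF geq] ipv]) simp
          have 2: "(path_cat (ip X tp x) (gg X x), hh X x) \<in> TPC L"
            unfolding gg_def by (rule LL.pc_cancel_l[OF ipv hX(1)]) (simp add: hX(2))
          show ?thesis using LL.pc_trans[OF 1 2] thX az(3) Yt y_def by simp
        qed
      qed
    qed
  qed
qed

lemma good_th: "good L th"
  unfolding good_def using th_valid th_edge by blast

end




context dia begin

lemma thin: "m \<le> n \<Longrightarrow> (\<forall>k. 1 \<le> k \<and> k \<le> m \<longrightarrow> INJ k) \<Longrightarrow> \<exists>\<theta>. good (Im m) \<theta>"
proof (induction m)
  case 0
  have "good (Im 0) (\<lambda>p. p0)" for p0 by (simp add: good_def Im_0 tot_obj_def)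
  thus ?case by blast
next
  case (Suc m)
  then obtain \<theta>T where g: "good (Im m) \<theta>T" by auto
  interpret S: stp n Phi PhiO PhiM "Suc m" \<theta>T
    by unfold_locales (use Suc.prems g in auto)
  show ?case using S.good_th by blast
qed

lemma obj_step_TV: "I \<subseteq> B \<Longrightarrow> (p,q) \<in> obj_step I Phi PhiO \<Longrightarrow> p \<in> TV I \<and> q \<in> TV I"
proof -
  assume I: "I \<subseteq> B" and "(p,q) \<in> obj_step I Phi PhiO"
  then obtain X Y x where h: "p = (X,x)" "q = (Y, PhiO X Y x)" "X \<in> I" "Y \<in> I" "X \<subseteq> Y" "x \<in> Obj (Phi X)"
    unfolding obj_step_def by blast
  have "X \<in> B" "Y \<in> B" using h I by blast+
  hence "PhiO X Y x \<in> Obj (Phi Y)" using obj_map h by blast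
  thus ?thesis using h by (simp add: tot_obj_iff)
qed

lemma obj_eq_inv:
  assumes I: "I \<subseteq> B" and inv: "\<And>a b. (a,b) \<in> obj_step I Phi PhiO \<Longrightarrow> f a = f b"
  and pq: "(p,q) \<in> obj_eq I Phi PhiO"
  shows "f p = f q \<and> q \<in> TV I"
proof -
  have p: "p \<in> TV I" and r: "(p,q) \<in> (obj_step I Phi PhiO \<union> (obj_step I Phi PhiO)\<inverse>)\<^sup>*"
    using pq unfolding obj_eq_def by blast+
  from r show ?thesis
  proof (induction rule: rtrancl_induct)
    case base thus ?case using p by simp
  next
    case (step q r)
    have "f q = f r \<and> r \<in> TV I"
    proof (rule UnE[OF step.hyps(2)])
      assume "(q,r) \<in> obj_step I Phi PhiO" thus ?thesis using inv obj_step_TV[OF I] by blast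
    next
      assume "(q,r) \<in> (obj_step I Phi PhiO)\<inverse>"
      hence "(r,q) \<in> obj_step I Phi PhiO" by simp
      thus ?thesis using inv obj_step_TV[OF I] by metis
    qed
    thus ?case using step.IH by simp
  qed
qed

lemma obj_eq_equiv: assumes I: "I \<subseteq> B" shows "equiv (TV I) (obj_eq I Phi PhiO)"
proof (rule equivI)
  show "obj_eq I Phi PhiO \<subseteq> TV I \<times> TV I"
  proof
    fix pq assume a: "pq \<in> obj_eq I Phi PhiO"
    obtain p q where pq: "pq = (p,q)" by (cases pq)
    have "p \<in> TV I" using a pq unfolding obj_eq_def by blast
    moreover have "q \<in> TV I" using obj_eq_inv[OF I, of "\<lambda>_. ()" p q] a pq by simp
    ultimately show "pq \<in> TV I \<times> TV I" using pq by simp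
  qed
next
  show "refl_on (TV I) (obj_eq I Phi PhiO)"
    unfolding refl_on_def obj_eq_def by blast
next
  show "sym (obj_eq I Phi PhiO)"
  proof (rule symI)
    fix p q assume a: "(p,q) \<in> obj_eq I Phi PhiO"
    have q: "q \<in> TV I" using obj_eq_inv[OF I, of "\<lambda>_. ()" p q] a by simp
    have "(p,q) \<in> (obj_step I Phi PhiO \<union> (obj_step I Phi PhiO)\<inverse>)\<^sup>*" using a unfolding obj_eq_def by blast
    hence "(q,p) \<in> ((obj_step I Phi PhiO \<union> (obj_step I Phi PhiO)\<inverse>)\<^sup>*)\<inverse>" by simp
    hence "(q,p) \<in> ((obj_step I Phi PhiO \<union> (obj_step I Phi PhiO)\<inverse>)\<inverse>)\<^sup>*" by (simp add: rtrancl_converse)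
    moreover have "(obj_step I Phi PhiO \<union> (obj_step I Phi PhiO)\<inverse>)\<inverse> = obj_step I Phi PhiO \<union> (obj_step I Phi PhiO)\<inverse>"
      by (simp add: converse_Un Un_commute)
    ultimately show "(q,p) \<in> obj_eq I Phi PhiO" using q unfolding obj_eq_def by simp
  qed
next
  show "trans (obj_eq I Phi PhiO)"
  proof (rule transI)
    fix p q r assume "(p,q) \<in> obj_eq I Phi PhiO" "(q,r) \<in> obj_eq I Phi PhiO"
    thus "(p,r) \<in> obj_eq I Phi PhiO" unfolding obj_eq_def by (blast intro: rtrancl_trans)
  qed
qed

lemma obj_step_in: "X \<in> I \<Longrightarrow> Y \<in> I \<Longrightarrow> X \<subseteq> Y \<Longrightarrow> x \<in> Obj (Phi X) \<Longrightarrow>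
   ((X,x),(Y,PhiO X Y x)) \<in> obj_step I Phi PhiO"
  unfolding obj_step_def by blast

lemma obj_eq_step: "I \<subseteq> B \<Longrightarrow> X \<in> I \<Longrightarrow> Y \<in> I \<Longrightarrow> X \<subseteq> Y \<Longrightarrow> x \<in> Obj (Phi X) \<Longrightarrow>
   ((X,x),(Y,PhiO X Y x)) \<in> obj_eq I Phi PhiO"
  unfolding obj_eq_def using obj_step_in[of X I Y x] by (auto simp: tot_obj_iff)

lemma INJ_from_cond:
  assumes m: "1 \<le> m" "m \<le> n" and c: "cond_A Phi PhiO PhiM ({1..n} - {m}) {m+1..n}"
  shows "INJ m"
proof -
  let ?V = "{1..n} - {m}"
  let ?A = "Bsets_rel ?V {m+1..n}"
  have mm: "m \<in> {1..n}" using m by simp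
  have VB: "?V \<in> B" unfolding Bsets_def using mm by blast
  have AB: "?A \<subseteq> B" unfolding Bsets_def Bsets_rel_def by blast
  have inv: "PhiO (fst a) ?V (snd a) = PhiO (fst b) ?V (snd b)" if st: "(a,b) \<in> obj_step ?A Phi PhiO" for a b
  proof -
    obtain X Y x where h: "a = (X,x)" "b = (Y, PhiO X Y x)" "X \<in> ?A" "Y \<in> ?A" "X \<subseteq> Y" "x \<in> Obj (Phi X)"
      using st unfolding obj_step_def by blast
    have XB: "X \<in> B" and YB: "Y \<in> B" using h AB by blast+
    have YV: "Y \<subseteq> ?V" using h(4) unfolding Bsets_rel_def by blast
    show ?thesis using O_comp[OF XB YB VB h(5) YV h(6)] h by simp
  qed
  have ceq: "canon_obj PhiO ?V (obj_eq ?A Phi PhiO `` {p}) = PhiO (fst p) ?V (snd p)" if p: "p \<in> TV ?A" for p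
  proof -
    have "p \<in> obj_eq ?A Phi PhiO `` {p}" using p unfolding obj_eq_def by blast
    hence s: "(SOME q. q \<in> obj_eq ?A Phi PhiO `` {p}) \<in> obj_eq ?A Phi PhiO `` {p}" by (rule someI)
    hence "(p, SOME q. q \<in> obj_eq ?A Phi PhiO `` {p}) \<in> obj_eq ?A Phi PhiO" by simp
    hence "PhiO (fst p) ?V (snd p) = PhiO (fst (SOME q. q \<in> obj_eq ?A Phi PhiO `` {p})) ?V (snd (SOME q. q \<in> obj_eq ?A Phi PhiO `` {p}))"
      using obj_eq_inv[OF AB, of "\<lambda>a. PhiO (fst a) ?V (snd a)"] inv by blast
    thus ?thesis unfolding canon_obj_def by (simp add: case_prod_beta)
  qed
  have io: "inj_on (canon_obj PhiO ?V) (TV ?A // obj_eq ?A Phi PhiO)"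
    using c unfolding cond_A_def colim_gpd_def by (simp add: pres_gpd_def colim_V_def)
  show ?thesis unfolding INJ_def
  proof (intro ballI impI)
    fix p q assume p: "p \<in> TV ?A" and q: "q \<in> TV ?A" and e: "PhiO (fst p) ?V (snd p) = PhiO (fst q) ?V (snd q)"
    have pc: "obj_eq ?A Phi PhiO `` {p} \<in> TV ?A // obj_eq ?A Phi PhiO" using p by (rule quotientI)
    have qc: "obj_eq ?A Phi PhiO `` {q} \<in> TV ?A // obj_eq ?A Phi PhiO" using q by (rule quotientI)
    have "canon_obj PhiO ?V (obj_eq ?A Phi PhiO `` {p}) = canon_obj PhiO ?V (obj_eq ?A Phi PhiO `` {q})"
      unfolding ceq[OF p] ceq[OF q] by (rule e)
    hence "obj_eq ?A Phi PhiO `` {p} = obj_eq ?A Phi PhiO `` {q}" by (rule inj_onD[OF io _ pc qc])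
    thus "(p,q) \<in> obj_eq ?A Phi PhiO"
      using eq_equiv_class_iff[OF obj_eq_equiv[OF AB] p q] by blast
  qed
qed

lemma INJ_1: "INJ 1"
proof -
  have e: "{1..n} - {1::nat} = {1+1..n}" by auto
  have "Bsets_rel ({1..n} - {1}) {1+1..n} = {}" unfolding e Bsets_rel_def by blast
  thus ?thesis by (simp add: INJ_def tot_obj_def)
qed

end




declare One_nat_def[simp del]

context dia begin

abbreviation "CV \<equiv> colim_V B Phi PhiO"
abbreviation "CE \<equiv> colim_E B Phi"
abbreviation "cs \<equiv> colim_s Phi PhiO B"
abbreviation "ct \<equiv> colim_t Phi PhiO B"
abbreviation "CR \<equiv> colim_R B Phi PhiO PhiM"
abbreviation "CPC \<equiv> pcong CV CE cs ct CR"
abbreviation "CVP \<equiv> valid_path CV CE cs ct"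
abbreviation "cl p \<equiv> obj_eq B Phi PhiO `` {p}"

lemma cs_simp[simp]: "colim_s Phi PhiO I (X,f) = obj_eq I Phi PhiO `` {(X, dom (Phi X) f)}" by (simp add: colim_s_def)
lemma ct_simp[simp]: "colim_t Phi PhiO I (X,f) = obj_eq I Phi PhiO `` {(X, cod (Phi X) f)}" by (simp add: colim_t_def)
lemma CE_iff: "(X,f) \<in> colim_E I Phi \<longleftrightarrow> X \<in> I \<and> f \<in> Arr (Phi X)" by (simp add: colim_E_def)

lemma eqv: "equiv (TV B) (obj_eq B Phi PhiO)" by (rule obj_eq_equiv) simp

lemma cl_eq: "(p,q) \<in> obj_eq B Phi PhiO \<Longrightarrow> cl p = cl q"
  using eqv by (rule equiv_class_eq)

lemma cl_in: "p \<in> TV B \<Longrightarrow> cl p \<in> CV"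
  unfolding colim_V_def by (rule quotientI)

lemma cl_step: "X \<in> B \<Longrightarrow> Y \<in> B \<Longrightarrow> X \<subseteq> Y \<Longrightarrow> x \<in> Obj (Phi X) \<Longrightarrow> cl (X,x) = cl (Y, PhiO X Y x)"
  by (rule cl_eq, rule obj_eq_step) auto

lemma pgC: "pg CV CE cs ct"
proof
  fix e assume "e \<in> CE"
  obtain X f where e0: "e = (X,f)" by (cases e)
  hence e: "e = (X,f)" "X \<in> B" "f \<in> Arr (Phi X)" using \<open>e \<in> CE\<close> CE_iff by auto
  thus "cs e \<in> CV \<and> ct e \<in> CV" using dom_obj[OF e(2,3)] cl_in by (simp add: tot_obj_iff)
qed

lemma pgTB: "pg (TV B) (TE B) tcolim_s (tcolim_t Phi)" by (rule pgT) simp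

definition dvm where "dvm p = cl p"
definition dem where "dem e = (dvm (tcolim_s e), [(delta_edge e, True)], dvm (tcolim_t Phi e))"

lemma delta_edge_simp[simp]: "delta_edge (X,x,Y,g) = (Y,g)" by (simp add: delta_edge_def)

lemma dem_ep: assumes "(X,x,Y,g) \<in> TE B" shows "dem (X,x,Y,g) = ep cs ct (Y,g)"
proof -
  have h: "X \<in> B" "Y \<in> B" "X \<subseteq> Y" "x \<in> Obj (Phi X)" "dom (Phi Y) g = PhiO X Y x" using assms by (simp_all add: TE_iff)
  have "cl (X,x) = cl (Y, dom (Phi Y) g)" using cl_step[OF h(1-4)] h(5) by simp
  thus ?thesis unfolding dem_def dvm_def ep_def delta_edge_simp ts_simp tt_simp colim_s_def colim_t_def by simp
qed

lemma cR1: assumes "X \<in> B" "f \<in> Arr (Phi X)" "g \<in> Arr (Phi X)" "cod (Phi X) f = dom (Phi X) g"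
  shows "((cl (X, dom (Phi X) f), [((X, f), True), ((X, g), True)], cl (X, cod (Phi X) g)),
       (cl (X, dom (Phi X) f), [((X, cmp (Phi X) g f), True)], cl (X, cod (Phi X) g))) \<in> CR"
  unfolding colim_R_def Let_def using assms by (intro UnI1 CollectI exI conjI) auto

lemma cR2: assumes "X \<in> B" "x \<in> Obj (Phi X)"
  shows "((cl (X,x), [((X, ide (Phi X) x), True)], cl (X,x)), (cl (X,x), [], cl (X,x))) \<in> CR"
  unfolding colim_R_def Let_def using assms by (intro UnI1 UnI2 CollectI exI conjI) auto

lemma cR3: assumes "X \<in> B" "Y \<in> B" "X \<subseteq> Y" "f \<in> Arr (Phi X)"
  shows "((cl (X, dom (Phi X) f), [((X, f), True)], cl (X, cod (Phi X) f)),
        (cl (X, dom (Phi X) f), [((Y, PhiM X Y f), True)], cl (X, cod (Phi X) f))) \<in> CR"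
  unfolding colim_R_def Let_def using assms by (intro UnI2 CollectI exI conjI) auto


lemma C_ep_valid: "(X,f) \<in> CE \<Longrightarrow> CVP (ep cs ct (X,f))"
proof -
  assume e: "(X,f) \<in> CE"
  interpret C: pg CV CE cs ct CR by (rule pgC)
  show ?thesis using C.st[OF e] e by (intro C.vp_ep) auto
qed

lemma C_rel_pc: assumes r: "(p,q) \<in> CR" shows "(p,q) \<in> CPC"
proof -
  interpret C: pg CV CE cs ct CR by (rule pgC)
  have "(p,q) \<in> {((cl (X, dom (Phi X) f), [((X, f), True), ((X, g), True)], cl (X, cod (Phi X) g)),
       (cl (X, dom (Phi X) f), [((X, cmp (Phi X) g f), True)], cl (X, cod (Phi X) g)))
       | X f g. X \<in> B \<and> f \<in> Arr (Phi X) \<and> g \<in> Arr (Phi X) \<and> cod (Phi X) f = dom (Phi X) g}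
     \<union> {((cl (X,x), [((X, ide (Phi X) x), True)], cl (X,x)), (cl (X,x), [], cl (X,x)))
       | X x. X \<in> B \<and> x \<in> Obj (Phi X)}
     \<union> {((cl (X, dom (Phi X) f), [((X, f), True)], cl (X, cod (Phi X) f)),
        (cl (X, dom (Phi X) f), [((Y, PhiM X Y f), True)], cl (X, cod (Phi X) f)))
       | X Y f. X \<in> B \<and> Y \<in> B \<and> X \<subseteq> Y \<and> f \<in> Arr (Phi X)}" (is "_ \<in> ?S1 \<union> ?S2 \<union> ?S3")
    using r unfolding colim_R_def Let_def .
  hence "(p,q) \<in> ?S1 \<or> (p,q) \<in> ?S2 \<or> (p,q) \<in> ?S3" by blast
  thus ?thesis
  proof (elim disjE)
    assume "(p,q) \<in> ?S1"
    then obtain X f g where h: "p = (cl (X, dom (Phi X) f), [((X, f), True), ((X, g), True)], cl (X, cod (Phi X) g))"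
      "q = (cl (X, dom (Phi X) f), [((X, cmp (Phi X) g f), True)], cl (X, cod (Phi X) g))"
      "X \<in> B" "f \<in> Arr (Phi X)" "g \<in> Arr (Phi X)" "cod (Phi X) f = dom (Phi X) g" by blast
    have c: "cmp (Phi X) g f \<in> Arr (Phi X)" "dom (Phi X) (cmp (Phi X) g f) = dom (Phi X) f"
      "cod (Phi X) (cmp (Phi X) g f) = cod (Phi X) g" using cmp_arr[OF h(3-6)] by auto
    have pe: "p = path_cat (ep cs ct (X,f)) (ep cs ct (X,g))" using h by simp
    have e1: "(X,f) \<in> CE" and e2: "(X,g) \<in> CE" unfolding CE_iff using h by blast+
    have "CVP (path_cat (ep cs ct (X,f)) (ep cs ct (X,g)))"
      by (rule C.vp_cat[OF C_ep_valid[OF e1] C_ep_valid[OF e2]]) (simp add: h(6))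
    hence vp: "CVP p" using pe by simp
    have "q = ep cs ct (X, cmp (Phi X) g f)" using h c by simp
    moreover have "(X, cmp (Phi X) g f) \<in> CE" unfolding CE_iff using h c by blast
    ultimately have vq: "CVP q" using C_ep_valid by simp
    show ?thesis using vp vq h(1,2) r by (intro pcong.prel) auto
  next
    assume "(p,q) \<in> ?S2"
    then obtain X x where h: "p = (cl (X,x), [((X, ide (Phi X) x), True)], cl (X,x))" "q = (cl (X,x), [], cl (X,x))"
      "X \<in> B" "x \<in> Obj (Phi X)" by blast
    have i: "ide (Phi X) x \<in> Arr (Phi X)" "dom (Phi X) (ide (Phi X) x) = x" "cod (Phi X) (ide (Phi X) x) = x"
      using ide_arr[OF h(3,4)] by auto
    have "p = ep cs ct (X, ide (Phi X) x)" using h i by simp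
    moreover have "(X, ide (Phi X) x) \<in> CE" unfolding CE_iff using h i by blast
    ultimately have vp: "CVP p" using C_ep_valid by simp
    have vq: "CVP q" using h cl_in[of "(X,x)"] by (simp add: C.vp_simp tot_obj_iff)
    show ?thesis using vp vq h(1,2) r by (intro pcong.prel) auto
  next
    assume "(p,q) \<in> ?S3"
    then obtain X Y f where h: "p = (cl (X, dom (Phi X) f), [((X, f), True)], cl (X, cod (Phi X) f))"
        "q = (cl (X, dom (Phi X) f), [((Y, PhiM X Y f), True)], cl (X, cod (Phi X) f))"
        "X \<in> B" "Y \<in> B" "X \<subseteq> Y" "f \<in> Arr (Phi X)" by blast
    have a: "PhiM X Y f \<in> Arr (Phi Y)" "dom (Phi Y) (PhiM X Y f) = PhiO X Y (dom (Phi X) f)"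
      "cod (Phi Y) (PhiM X Y f) = PhiO X Y (cod (Phi X) f)" using arr_map[OF h(3-6)] by auto
    have d: "dom (Phi X) f \<in> Obj (Phi X)" "cod (Phi X) f \<in> Obj (Phi X)" using dom_obj[OF h(3,6)] by auto
    have "p = ep cs ct (X, f)" using h by simp
    moreover have "(X, f) \<in> CE" unfolding CE_iff using h by blast
    ultimately have vp: "CVP p" using C_ep_valid by simp
    have "q = ep cs ct (Y, PhiM X Y f)" using h a cl_step[OF h(3-5) d(1)] cl_step[OF h(3-5) d(2)] by simp
    moreover have "(Y, PhiM X Y f) \<in> CE" unfolding CE_iff using h a by blast
    ultimately have vq: "CVP q" using C_ep_valid by simp
    show ?thesis using vp vq h(1,2) r by (intro pcong.prel) auto
  qed
qed


lemma dpmor: "pmor (TV B) (TE B) tcolim_s (tcolim_t Phi) (TR B) CV CE cs ct CR dvm dem"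
proof -
  interpret T: pg "TV B" "TE B" tcolim_s "tcolim_t Phi" "TR B" by (rule pgTB)
  interpret C: pg CV CE cs ct CR by (rule pgC)
  show ?thesis
  proof (unfold_locales)
    fix v assume "v \<in> TV B" thus "dvm v \<in> CV" unfolding dvm_def by (rule cl_in)
  next
    fix e assume e: "e \<in> TE B"
    obtain X x Y g where ex: "e = (X,x,Y,g)" by (cases e)
    have h: "Y \<in> B" "g \<in> Arr (Phi Y)" using e ex by (simp_all add: TE_iff)
    have "(Y,g) \<in> CE" unfolding CE_iff using h by blast
    hence "C.vp (dem e)" using C_ep_valid dem_ep e ex by simp
    thus "C.vp (dem e) \<and> path_src (dem e) = dvm (tcolim_s e) \<and> path_tgt (dem e) = dvm (tcolim_t Phi e)"
      by (simp add: dem_def)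
  next
    fix p q assume pq: "(p,q) \<in> TR B"
    have "(p,q) \<in> {(((X, x), [((X, x, Y, g), True), ((Y, cod (Phi Y) g, Z, h), True)], (Z, cod (Phi Z) h)),
       ((X, x), [((X, x, Z, cmp (Phi Z) h (PhiM Y Z g)), True)], (Z, cod (Phi Z) h)))
       | X x Y g Z h. (X, x, Y, g) \<in> TE B \<and> (Y, cod (Phi Y) g, Z, h) \<in> TE B} \<or>
      (p,q) \<in> {(((X, x), [((X, x, X, ide (Phi X) x), True)], (X, x)), ((X, x), [], (X, x)))
       | X x. X \<in> B \<and> x \<in> Obj (Phi X)}" using pq unfolding tcolim_R_def Un_iff .
    thus "(psub dvm dem p, psub dvm dem q) \<in> C.pc"
    proof
      assume "(p,q) \<in> {(((X, x), [((X, x, Y, g), True), ((Y, cod (Phi Y) g, Z, h), True)], (Z, cod (Phi Z) h)),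
       ((X, x), [((X, x, Z, cmp (Phi Z) h (PhiM Y Z g)), True)], (Z, cod (Phi Z) h)))
       | X x Y g Z h. (X, x, Y, g) \<in> TE B \<and> (Y, cod (Phi Y) g, Z, h) \<in> TE B}"
      then obtain X x Y g Z h where r: "p = ((X, x), [((X, x, Y, g), True), ((Y, cod (Phi Y) g, Z, h), True)], (Z, cod (Phi Z) h))"
        "q = ((X, x), [((X, x, Z, cmp (Phi Z) h (PhiM Y Z g)), True)], (Z, cod (Phi Z) h))"
        "(X, x, Y, g) \<in> TE B" "(Y, cod (Phi Y) g, Z, h) \<in> TE B" by blast
      have h: "X \<in> B" "Y \<in> B" "X \<subseteq> Y" "x \<in> Obj (Phi X)" "g \<in> Arr (Phi Y)" "dom (Phi Y) g = PhiO X Y x"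
        "Z \<in> B" "Y \<subseteq> Z" "h \<in> Arr (Phi Z)" "dom (Phi Z) h = PhiO Y Z (cod (Phi Y) g)"
        using r(3,4) by (simp_all add: TE_iff)
      have Pg: "PhiM Y Z g \<in> Arr (Phi Z)" "dom (Phi Z) (PhiM Y Z g) = PhiO Y Z (dom (Phi Y) g)"
        "cod (Phi Z) (PhiM Y Z g) = PhiO Y Z (cod (Phi Y) g)" using arr_map[OF h(2,7,8,5)] by auto
      have dg: "dom (Phi Y) g \<in> Obj (Phi Y)" "cod (Phi Y) g \<in> Obj (Phi Y)" using dom_obj[OF h(2,5)] by auto
      have E1: "cl (Y, dom (Phi Y) g) = cl (X,x)" using cl_step[OF h(1-4)] h(6) by simp
      have E2: "cl (Z, dom (Phi Z) (PhiM Y Z g)) = cl (X,x)" using cl_step[OF h(2,7,8) dg(1)] E1 Pg(2) by simp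
      have E3: "cl (Y, cod (Phi Y) g) = cl (Z, dom (Phi Z) h)" using cl_step[OF h(2,7,8) dg(2)] h(10) by simp
      have r3: "((cl (Y, dom (Phi Y) g), [((Y, g), True)], cl (Y, cod (Phi Y) g)),
        (cl (Y, dom (Phi Y) g), [((Z, PhiM Y Z g), True)], cl (Y, cod (Phi Y) g))) \<in> C.pc"
        by (rule C_rel_pc[OF cR3[OF h(2,7,8,5)]])
      have eh: "(Z,h) \<in> CE" unfolding CE_iff using h by blast
      have vh: "C.vp (cl (Y, cod (Phi Y) g), [((Z,h),True)], cl (Z, cod (Phi Z) h))"
        using C_ep_valid[OF eh] E3 by simp
      have r3': "((cl (X,x), [((Y, g), True), ((Z,h),True)], cl (Z, cod (Phi Z) h)),
        (cl (X,x), [((Z, PhiM Y Z g), True), ((Z,h),True)], cl (Z, cod (Phi Z) h))) \<in> C.pc"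
        using C.pc_cat_right[OF r3 vh] E1 by simp
      have r1: "((cl (X,x), [((Z, PhiM Y Z g), True), ((Z,h),True)], cl (Z, cod (Phi Z) h)),
         (cl (X,x), [((Z, cmp (Phi Z) h (PhiM Y Z g)), True)], cl (Z, cod (Phi Z) h))) \<in> C.pc"
        using C_rel_pc[OF cR1[OF h(7) Pg(1) h(9)]] Pg(3) h(10) E2 by simp
      show ?thesis using C.pc_trans[OF r3' r1] r(1,2) by (simp add: dem_def dvm_def)
    next
      assume "(p,q) \<in> {(((X, x), [((X, x, X, ide (Phi X) x), True)], (X, x)), ((X, x), [], (X, x)))
       | X x. X \<in> B \<and> x \<in> Obj (Phi X)}"
      then obtain X x where r: "p = ((X, x), [((X, x, X, ide (Phi X) x), True)], (X, x))" "q = ((X, x), [], (X, x))"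
        "X \<in> B" "x \<in> Obj (Phi X)" by blast
      show ?thesis using C_rel_pc[OF cR2[OF r(3,4)]] r(1,2) by (simp add: dem_def dvm_def)
    qed
  qed
qed

end




declare One_nat_def[simp del]

locale fin = dia n Phi PhiO PhiM
  for n and Phi :: "nat set \<Rightarrow> ('o,'m) gpd" and PhiO PhiM +
  fixes \<theta> :: "nat set \<times> 'o \<Rightarrow> (nat set \<times> 'o, nat set \<times> 'o \<times> nat set \<times> 'm) path"
  assumes gd: "good B \<theta>"
begin

sublocale T: pg "TV B" "TE B" tcolim_s "tcolim_t Phi" "TR B" by (rule pgTB)
sublocale C: pg CV CE cs ct CR by (rule pgC)
sublocale D: pmor "TV B" "TE B" tcolim_s "tcolim_t Phi" "TR B" CV CE cs ct CR dvm dem by (rule dpmor)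

lemma gV: assumes "p \<in> TV B" shows "T.vp (\<theta> p)" "path_src (\<theta> p) = p" "fst ` set (fst (snd (\<theta> p))) \<subseteq> iotas B"
proof -
  have "\<forall>p\<in>TV B. T.vp (\<theta> p) \<and> path_src (\<theta> p) = p \<and> fst ` set (fst (snd (\<theta> p))) \<subseteq> iotas B"
    using gd unfolding good_def by (rule conjunct1)
  thus "T.vp (\<theta> p)" "path_src (\<theta> p) = p" "fst ` set (fst (snd (\<theta> p))) \<subseteq> iotas B" using assms by auto
qed

lemma gE: assumes "X \<in> B" "Y \<in> B" "X \<subseteq> Y" "x \<in> Obj (Phi X)"
  shows "(path_cat (ip X Y x) (\<theta> (Y, PhiO X Y x)), \<theta> (X,x)) \<in> T.pc"
proof -
  have "\<forall>X Y x. X \<in> B \<longrightarrow> Y \<in> B \<longrightarrow> X \<subseteq> Y \<longrightarrow> x \<in> Obj (Phi X) \<longrightarrow>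
        (path_cat (ip X Y x) (\<theta> (Y, PhiO X Y x)), \<theta> (X,x)) \<in> T.pc"
    using gd unfolding good_def by (rule conjunct2)
  thus ?thesis using assms by blast
qed

definition r where "r p = path_tgt (\<theta> p)"

lemma r_TV: "p \<in> TV B \<Longrightarrow> r p \<in> TV B"
  using gV[of p] unfolding r_def by (cases "\<theta> p") (simp add: T.vp_simp)

lemma r_step: assumes "(a,b) \<in> obj_step B Phi PhiO" shows "r a = r b"
proof -
  obtain X Y x where h: "a = (X,x)" "b = (Y, PhiO X Y x)" "X \<in> B" "Y \<in> B" "X \<subseteq> Y" "x \<in> Obj (Phi X)"
    using assms unfolding obj_step_def by blast
  show ?thesis using T.pc_valid[OF gE[OF h(3-6)]] h(1,2) unfolding r_def by simp
qed

lemma r_const: "(p,q) \<in> obj_eq B Phi PhiO \<Longrightarrow> r p = r q"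
  using obj_eq_inv[of B r p q] r_step by blast

lemma iota_walk_triv:
  "T.vp (a,w,b) \<Longrightarrow> fst ` set w \<subseteq> iotas B \<Longrightarrow> (psub dvm dem (a,w,b), (cl a, [], cl a)) \<in> C.pc"
proof (induction w arbitrary: a)
  case Nil
  hence ab: "a = b" "a \<in> TV B" by (auto simp: T.vp_simp)
  have c: "cl a \<in> CV" by (rule cl_in[OF ab(2)])
  have "C.vp (cl a, [], cl a)" using c by (simp add: C.vp_simp)
  thus ?case using ab by (simp add: dvm_def C.pc_refl)
next
  case (Cons z w)
  obtain e bb where z: "z = (e,bb)" by (cases z)
  have eI: "e \<in> iotas B" using Cons.prems(2) z by auto
  then obtain X Y x where ei: "e = iota X Y x" "X \<in> B" "Y \<in> B" "X \<subseteq> Y" "x \<in> Obj (Phi X)"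
    unfolding iotas_def by blast
  define y where "y = PhiO X Y x"
  have y: "y \<in> Obj (Phi Y)" using obj_map ei y_def by blast
  have st: "tcolim_s e = (X,x)" "tcolim_t Phi e = (Y,y)" using iota_t[OF ei(3,2,4,5)] ei(1) y_def by auto
  have de: "delta_edge e = (Y, ide (Phi Y) y)" using ei(1) y_def by (simp add: iota_def)
  have cxy: "cl (X,x) = cl (Y,y)" using cl_step[OF ei(2-5)] y_def by simp
  have R2: "((cl (Y,y), [((Y, ide (Phi Y) y), True)], cl (Y,y)), (cl (Y,y), [], cl (Y,y))) \<in> C.pc"
    by (rule C_rel_pc[OF cR2[OF ei(3) y]])
  have aTV: "a \<in> TV B" using Cons.prems by (simp add: T.vp_simp)
  show ?case
  proof (cases bb)
    case True
    hence w: "e \<in> TE B" "a = (X,x)" "is_walk (TE B) tcolim_s (tcolim_t Phi) (Y,y) w b"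
      using Cons.prems z st by (auto simp: T.vp_simp)
    have vw: "T.vp ((Y,y),w,b)" using w Cons.prems st T.st[OF w(1)] by (auto simp: T.vp_simp)
    have IH: "(psub dvm dem ((Y,y),w,b), (cl (Y,y), [], cl (Y,y))) \<in> C.pc"
      using Cons.IH[OF vw] Cons.prems(2) by auto
    have "psub dvm dem (a, z # w, b) = path_cat (cl (Y,y), [((Y, ide (Phi Y) y), True)], cl (Y,y)) (psub dvm dem ((Y,y),w,b))"
      using z True w(2) cxy de by (simp add: dem_def dvm_def)
    moreover have "(path_cat (cl (Y,y), [((Y, ide (Phi Y) y), True)], cl (Y,y)) (psub dvm dem ((Y,y),w,b)),
        path_cat (cl (Y,y), [], cl (Y,y)) (cl (Y,y), [], cl (Y,y))) \<in> C.pc"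
      by (rule C.pc_cat[OF R2 IH]) (simp add: dvm_def)
    ultimately show ?thesis using w(2) cxy by simp
  next
    case False
    hence w: "e \<in> TE B" "a = (Y,y)" "is_walk (TE B) tcolim_s (tcolim_t Phi) (X,x) w b"
      using Cons.prems z st by (auto simp: T.vp_simp)
    have vw: "T.vp ((X,x),w,b)" using w Cons.prems st T.st[OF w(1)] by (auto simp: T.vp_simp)
    have IH: "(psub dvm dem ((X,x),w,b), (cl (X,x), [], cl (X,x))) \<in> C.pc"
      using Cons.IH[OF vw] Cons.prems(2) by auto
    have R2': "((cl (Y,y), [((Y, ide (Phi Y) y), False)], cl (Y,y)), (cl (Y,y), [], cl (Y,y))) \<in> C.pc"
      using C.pc_rev[OF R2] by (simp add: flipw_def)
    have "psub dvm dem (a, z # w, b) = path_cat (cl (Y,y), [((Y, ide (Phi Y) y), False)], cl (Y,y)) (psub dvm dem ((X,x),w,b))"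
      using z False w(2) cxy de by (simp add: dem_def dvm_def flipw_def)
    moreover have "(path_cat (cl (Y,y), [((Y, ide (Phi Y) y), False)], cl (Y,y)) (psub dvm dem ((X,x),w,b)),
        path_cat (cl (Y,y), [], cl (Y,y)) (cl (X,x), [], cl (X,x))) \<in> C.pc"
      by (rule C.pc_cat[OF R2' IH]) (simp add: cxy dvm_def)
    ultimately show ?thesis using w(2) cxy by simp
  qed
qed

lemma dtheta: assumes "p \<in> TV B" shows "(psub dvm dem (\<theta> p), (cl p, [], cl p)) \<in> C.pc"
proof -
  obtain a w b where t: "\<theta> p = (a,w,b)" by (cases "\<theta> p")
  have "a = p" using gV(2)[OF assms] t by simp
  thus ?thesis using iota_walk_triv[of a w b] gV[OF assms] t by simp
qed

lemma cl_r: "p \<in> TV B \<Longrightarrow> cl (r p) = cl p"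
  using C.pc_valid[OF dtheta, of p] unfolding r_def dvm_def by simp


definition Psi where "Psi w = path_cat (path_rev (\<theta> (path_src w))) (path_cat w (\<theta> (path_tgt w)))"

lemma vp_ends: "T.vp w \<Longrightarrow> path_src w \<in> TV B \<and> path_tgt w \<in> TV B"
  by (cases w) (simp add: T.vp_simp)

lemma Psi_valid: assumes "T.vp w"
  shows "T.vp (Psi w)" "path_src (Psi w) = r (path_src w)" "path_tgt (Psi w) = r (path_tgt w)"
proof -
  have e: "path_src w \<in> TV B" "path_tgt w \<in> TV B" using vp_ends[OF assms] by auto
  show "T.vp (Psi w)" unfolding Psi_def using gV[OF e(1)] gV[OF e(2)] assms
    by (intro T.vp_cat T.vp_rev) auto
  show "path_src (Psi w) = r (path_src w)" "path_tgt (Psi w) = r (path_tgt w)"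
    unfolding Psi_def r_def by simp_all
qed

lemma Psi_cong: assumes "(w,w') \<in> T.pc" shows "(Psi w, Psi w') \<in> T.pc"
proof -
  note v = T.pc_valid[OF assms]
  have e: "path_src w \<in> TV B" "path_tgt w \<in> TV B" using vp_ends v by auto
  have "(path_cat w (\<theta> (path_tgt w)), path_cat w' (\<theta> (path_tgt w))) \<in> T.pc"
    using gV[OF e(2)] by (intro T.pc_cat_right[OF assms]) auto
  hence "(path_cat (path_rev (\<theta> (path_src w))) (path_cat w (\<theta> (path_tgt w))),
          path_cat (path_rev (\<theta> (path_src w))) (path_cat w' (\<theta> (path_tgt w)))) \<in> T.pc"
    using gV[OF e(1)] by (intro T.pc_cat_left T.vp_rev) auto
  thus ?thesis unfolding Psi_def using v by simp
qed

lemma Psi_cat: assumes "T.vp w1" "T.vp w2" "path_tgt w1 = path_src w2"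
  shows "(Psi (path_cat w1 w2), path_cat (Psi w1) (Psi w2)) \<in> T.pc"
proof -
  have e: "path_src w1 \<in> TV B" "path_tgt w1 \<in> TV B" "path_tgt w2 \<in> TV B" using vp_ends assms by auto
  note g1 = gV[OF e(1)] and g2 = gV[OF e(2)] and g3 = gV[OF e(3)]
  have u: "T.vp (path_cat (path_rev (\<theta> (path_src w1))) w1)" using g1 assms by (intro T.vp_cat T.vp_rev) auto
  have v: "T.vp (path_cat w2 (\<theta> (path_tgt w2)))" using g3 assms by (intro T.vp_cat) auto
  have "(path_cat (path_cat (path_rev (\<theta> (path_src w1))) w1)
          (path_cat (\<theta> (path_tgt w1)) (path_cat (path_rev (\<theta> (path_tgt w1))) (path_cat w2 (\<theta> (path_tgt w2))))),
         path_cat (path_cat (path_rev (\<theta> (path_src w1))) w1) (path_cat w2 (\<theta> (path_tgt w2)))) \<in> T.pc"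
    by (rule T.pc_cancel_mid[OF u g2(1) v]) (use g2 assms in simp_all)
  thus ?thesis unfolding Psi_def using assms(3) by (simp add: path_cat_assoc T.pc_sym)
qed

lemma Psi_ip: assumes "X \<in> B" "Y \<in> B" "X \<subseteq> Y" "x \<in> Obj (Phi X)"
  shows "(Psi (ip X Y x), (r (X,x), [], r (X,x))) \<in> T.pc"
proof -
  have xT: "(X,x) \<in> TV B" using assms by (simp add: tot_obj_iff)
  have "(path_cat (path_rev (\<theta> (X,x))) (path_cat (ip X Y x) (\<theta> (Y, PhiO X Y x))),
         path_cat (path_rev (\<theta> (X,x))) (\<theta> (X,x))) \<in> T.pc"
    using gV[OF xT] by (intro T.pc_cat_left[OF gE[OF assms]] T.vp_rev) auto
  moreover have "(path_cat (path_rev (\<theta> (X,x))) (\<theta> (X,x)), idp (path_tgt (\<theta> (X,x)))) \<in> T.pc"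
    using gV[OF xT] by (intro T.pc_inv_left) auto
  ultimately show ?thesis unfolding Psi_def r_def by (simp add: T.pc_trans)
qed

definition vmF where "vmF c = r (SOME q. q \<in> c)"
definition emF where "emF e = (case e of (Y,f) \<Rightarrow> Psi (ep tcolim_s (tcolim_t Phi) (Y, dom (Phi Y) f, Y, f)))"

lemma vmF_cl: assumes "p \<in> TV B" shows "vmF (cl p) = r p"
proof -
  have "p \<in> cl p" using assms unfolding obj_eq_def by blast
  hence "(SOME q. q \<in> cl p) \<in> cl p" by (rule someI)
  hence "(p, SOME q. q \<in> cl p) \<in> obj_eq B Phi PhiO" by simp
  thus ?thesis unfolding vmF_def using r_const by simp
qed

lemma eT: assumes "(Y,f) \<in> CE"
  shows "(Y, dom (Phi Y) f, Y, f) \<in> TE B" "T.vp (ep tcolim_s (tcolim_t Phi) (Y, dom (Phi Y) f, Y, f))"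
proof -
  have h: "Y \<in> B" "f \<in> Arr (Phi Y)" using assms unfolding CE_iff by auto
  have d: "dom (Phi Y) f \<in> Obj (Phi Y)" using dom_obj[OF h] by auto
  show e: "(Y, dom (Phi Y) f, Y, f) \<in> TE B" using h d O_id[OF h(1) d] by (simp add: TE_iff)
  show "T.vp (ep tcolim_s (tcolim_t Phi) (Y, dom (Phi Y) f, Y, f))" using T.st[OF e] e by (intro T.vp_ep) auto
qed

lemma emF_props: assumes "(Y,f) \<in> CE"
  shows "T.vp (emF (Y,f))" "path_src (emF (Y,f)) = r (Y, dom (Phi Y) f)" "path_tgt (emF (Y,f)) = r (Y, cod (Phi Y) f)"
  using Psi_valid[OF eT(2)[OF assms]] unfolding emF_def by simp_all

lemma CR_cases: assumes "(p,q) \<in> CR"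
  obtains (c1) X f g where "p = (cl (X, dom (Phi X) f), [((X, f), True), ((X, g), True)], cl (X, cod (Phi X) g))"
      "q = (cl (X, dom (Phi X) f), [((X, cmp (Phi X) g f), True)], cl (X, cod (Phi X) g))"
      "X \<in> B" "f \<in> Arr (Phi X)" "g \<in> Arr (Phi X)" "cod (Phi X) f = dom (Phi X) g"
  | (c2) X x where "p = (cl (X,x), [((X, ide (Phi X) x), True)], cl (X,x))" "q = (cl (X,x), [], cl (X,x))"
      "X \<in> B" "x \<in> Obj (Phi X)"
  | (c3) X Y f where "p = (cl (X, dom (Phi X) f), [((X, f), True)], cl (X, cod (Phi X) f))"
        "q = (cl (X, dom (Phi X) f), [((Y, PhiM X Y f), True)], cl (X, cod (Phi X) f))"
        "X \<in> B" "Y \<in> B" "X \<subseteq> Y" "f \<in> Arr (Phi X)"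
proof -
  have "(p,q) \<in> {((cl (X, dom (Phi X) f), [((X, f), True), ((X, g), True)], cl (X, cod (Phi X) g)),
       (cl (X, dom (Phi X) f), [((X, cmp (Phi X) g f), True)], cl (X, cod (Phi X) g)))
       | X f g. X \<in> B \<and> f \<in> Arr (Phi X) \<and> g \<in> Arr (Phi X) \<and> cod (Phi X) f = dom (Phi X) g}
     \<union> {((cl (X,x), [((X, ide (Phi X) x), True)], cl (X,x)), (cl (X,x), [], cl (X,x)))
       | X x. X \<in> B \<and> x \<in> Obj (Phi X)}
     \<union> {((cl (X, dom (Phi X) f), [((X, f), True)], cl (X, cod (Phi X) f)),
        (cl (X, dom (Phi X) f), [((Y, PhiM X Y f), True)], cl (X, cod (Phi X) f)))
       | X Y f. X \<in> B \<and> Y \<in> B \<and> X \<subseteq> Y \<and> f \<in> Arr (Phi X)}" (is "_ \<in> ?S1 \<union> ?S2 \<union> ?S3")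
    using assms unfolding colim_R_def Let_def .
  hence "(p,q) \<in> ?S1 \<or> (p,q) \<in> ?S2 \<or> (p,q) \<in> ?S3" by blast
  thus ?thesis
  proof (elim disjE)
    assume "(p,q) \<in> ?S1" thus ?thesis using c1 by blast
  next
    assume "(p,q) \<in> ?S2" thus ?thesis using c2 by blast
  next
    assume "(p,q) \<in> ?S3" thus ?thesis using c3 by blast
  qed
qed


lemma psubF_ep: assumes "(Y,f) \<in> CE" shows "psub vmF emF (ep cs ct (Y,f)) = emF (Y,f)"
proof -
  have h: "Y \<in> B" "f \<in> Arr (Phi Y)" using assms unfolding CE_iff by auto
  have d: "(Y, dom (Phi Y) f) \<in> TV B" "(Y, cod (Phi Y) f) \<in> TV B" using dom_obj[OF h] h by (auto simp: tot_obj_iff)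
  obtain a w b where em: "emF (Y,f) = (a,w,b)" by (cases "emF (Y,f)")
  have "a = r (Y, dom (Phi Y) f)" "b = r (Y, cod (Phi Y) f)" using emF_props(2,3)[OF assms] em by auto
  thus ?thesis using em vmF_cl[OF d(1)] vmF_cl[OF d(2)] by simp
qed

lemma Fpmor: "pmor CV CE cs ct CR (TV B) (TE B) tcolim_s (tcolim_t Phi) (TR B) vmF emF"
proof (unfold_locales)
  fix v assume "v \<in> CV"
  then obtain p where p: "p \<in> TV B" "v = cl p" unfolding colim_V_def by (rule quotientE)
  thus "vmF v \<in> TV B" using vmF_cl r_TV by simp
next
  fix e assume e: "e \<in> CE"
  obtain Y f where ef: "e = (Y,f)" by (cases e)
  have "(Y,f) \<in> CE" using e ef by simp
  hence h: "Y \<in> B" "f \<in> Arr (Phi Y)" unfolding CE_iff by auto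
  have d: "(Y, dom (Phi Y) f) \<in> TV B" "(Y, cod (Phi Y) f) \<in> TV B" using dom_obj[OF h] h by (auto simp: tot_obj_iff)
  show "T.vp (emF e) \<and> path_src (emF e) = vmF (cs e) \<and> path_tgt (emF e) = vmF (ct e)"
    using emF_props[of Y f] e ef vmF_cl[OF d(1)] vmF_cl[OF d(2)] by simp
next
  fix p q assume pq: "(p,q) \<in> CR"
  show "(psub vmF emF p, psub vmF emF q) \<in> T.pc"
    using pq
  proof (cases rule: CR_cases)
    case (c1 X f g)
    have e1: "(X,f) \<in> CE" and e2: "(X,g) \<in> CE" and e3: "(X, cmp (Phi X) g f) \<in> CE"
      unfolding CE_iff using c1 cmp_arr[OF c1(3-6)] by auto
    have cm: "dom (Phi X) (cmp (Phi X) g f) = dom (Phi X) f" "cod (Phi X) (cmp (Phi X) g f) = cod (Phi X) g"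
      using cmp_arr[OF c1(3-6)] by auto
    have p: "p = path_cat (ep cs ct (X,f)) (ep cs ct (X,g))" using c1 by simp
    have q: "q = ep cs ct (X, cmp (Phi X) g f)" using c1 cm by simp
    have pp: "psub vmF emF p = path_cat (emF (X,f)) (emF (X,g))" unfolding p psub_cat psubF_ep[OF e1] psubF_ep[OF e2] ..
    have qq: "psub vmF emF q = emF (X, cmp (Phi X) g f)" unfolding q psubF_ep[OF e3] ..
    have tf: "(X, dom (Phi X) f, X, f) \<in> TE B" and tg: "(X, dom (Phi X) g, X, g) \<in> TE B" using eT e1 e2 by auto
    have tg': "(X, cod (Phi X) f, X, g) \<in> TE B" using tg c1(6) by simp
    have Rc: "(path_cat (ep tcolim_s (tcolim_t Phi) (X, dom (Phi X) f, X, f)) (ep tcolim_s (tcolim_t Phi) (X, cod (Phi X) f, X, g)),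
          ep tcolim_s (tcolim_t Phi) (X, dom (Phi X) f, X, cmp (Phi X) g (PhiM X X f))) \<in> T.pc"
      using T_rel_comp[of B, OF _ tf] tg' by simp
    have Rc': "(path_cat (ep tcolim_s (tcolim_t Phi) (X, dom (Phi X) f, X, f)) (ep tcolim_s (tcolim_t Phi) (X, dom (Phi X) g, X, g)),
          ep tcolim_s (tcolim_t Phi) (X, dom (Phi X) (cmp (Phi X) g f), X, cmp (Phi X) g f)) \<in> T.pc"
      using Rc M_id[OF c1(3,4)] c1(6) cm by simp
    have 1: "(Psi (path_cat (ep tcolim_s (tcolim_t Phi) (X, dom (Phi X) f, X, f)) (ep tcolim_s (tcolim_t Phi) (X, dom (Phi X) g, X, g))),
              path_cat (emF (X,f)) (emF (X,g))) \<in> T.pc"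
    proof -
      have tt: "path_tgt (ep tcolim_s (tcolim_t Phi) (X, dom (Phi X) f, X, f)) = path_src (ep tcolim_s (tcolim_t Phi) (X, dom (Phi X) g, X, g))"
        using c1(6) by simp
      show ?thesis using Psi_cat[OF eT(2)[OF e1] eT(2)[OF e2] tt] by (simp only: emF_def prod.case)
    qed
    have 2: "(Psi (path_cat (ep tcolim_s (tcolim_t Phi) (X, dom (Phi X) f, X, f)) (ep tcolim_s (tcolim_t Phi) (X, dom (Phi X) g, X, g))),
              emF (X, cmp (Phi X) g f)) \<in> T.pc"
      using Psi_cong[OF Rc'] by (simp only: emF_def prod.case)
    show ?thesis unfolding pp qq using T.pc_trans[OF T.pc_sym[OF 1] 2] .
  next
    case (c2 X x)
    have i: "ide (Phi X) x \<in> Arr (Phi X)" "dom (Phi X) (ide (Phi X) x) = x" "cod (Phi X) (ide (Phi X) x) = x"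
      using ide_arr[OF c2(3,4)] by auto
    have e: "(X, ide (Phi X) x) \<in> CE" unfolding CE_iff using c2 i by auto
    have p: "p = ep cs ct (X, ide (Phi X) x)" using c2 i by simp
    have xT: "(X,x) \<in> TV B" using c2 by (simp add: tot_obj_iff)
    have q: "psub vmF emF q = (r (X,x), [], r (X,x))" using c2 vmF_cl[OF xT] by simp
    have o: "PhiO X X x = x" using O_id[OF c2(3,4)] .
    have ipe: "ip X X x = ep tcolim_s (tcolim_t Phi) (X, dom (Phi X) (ide (Phi X) x), X, ide (Phi X) x)"
      using i o by (simp add: ip_def iota_def)
    have "psub vmF emF p = Psi (ip X X x)" unfolding p psubF_ep[OF e] emF_def ipe by simp
    thus ?thesis using Psi_ip[OF c2(3) c2(3) _ c2(4)] q by simp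
  next
    case (c3 X Y f)
    define a where "a = dom (Phi X) f"
    define b where "b = cod (Phi X) f"
    have ab: "a \<in> Obj (Phi X)" "b \<in> Obj (Phi X)" using dom_obj[OF c3(3,6)] a_def b_def by auto
    have Pf: "PhiM X Y f \<in> Arr (Phi Y)" "dom (Phi Y) (PhiM X Y f) = PhiO X Y a" "cod (Phi Y) (PhiM X Y f) = PhiO X Y b"
      using arr_map[OF c3(3-6)] a_def b_def by auto
    have e1: "(X,f) \<in> CE" and e2: "(Y, PhiM X Y f) \<in> CE" unfolding CE_iff using c3 Pf by auto
    have cxy: "cl (X,a) = cl (Y, PhiO X Y a)" "cl (X,b) = cl (Y, PhiO X Y b)"
      using cl_step[OF c3(3-5) ab(1)] cl_step[OF c3(3-5) ab(2)] by auto
    have p: "p = ep cs ct (X,f)" using c3 by simp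
    have q: "q = ep cs ct (Y, PhiM X Y f)" using c3 Pf cxy a_def b_def by simp
    have pp: "psub vmF emF p = Psi (ep tcolim_s (tcolim_t Phi) (X,a,X,f))" unfolding p psubF_ep[OF e1] emF_def a_def by simp
    have qq: "psub vmF emF q = Psi (ep tcolim_s (tcolim_t Phi) (Y, PhiO X Y a, Y, PhiM X Y f))"
      unfolding q psubF_ep[OF e2] emF_def using Pf by simp
    have tf: "(X,a,X,f) \<in> TE B" using eT(1)[OF e1] a_def by simp
    have PbO: "PhiO X Y b \<in> Obj (Phi Y)" using obj_map[OF c3(3-5) ab(2)] .
    have ti: "(X, cod (Phi X) f, Y, ide (Phi Y) (PhiO X Y b)) \<in> TE B"
      using iota_TE[of B X Y b] c3 ab b_def by (simp add: iota_def)
    have R1: "(path_cat (ep tcolim_s (tcolim_t Phi) (X,a,X,f)) (ep tcolim_s (tcolim_t Phi) (X, cod (Phi X) f, Y, ide (Phi Y) (PhiO X Y b))),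
          ep tcolim_s (tcolim_t Phi) (X,a,Y, cmp (Phi Y) (ide (Phi Y) (PhiO X Y b)) (PhiM X Y f))) \<in> T.pc"
      using T_rel_comp[of B, OF _ tf] ti by simp
    have ci: "cmp (Phi Y) (ide (Phi Y) (PhiO X Y b)) (PhiM X Y f) = PhiM X Y f"
      using cmp_ide_l[OF c3(4) Pf(1)] Pf(3) by simp
    have ipb: "ep tcolim_s (tcolim_t Phi) (X, cod (Phi X) f, Y, ide (Phi Y) (PhiO X Y b)) = ip X Y b"
      using ip_ep[OF c3(4,3,5) ab(2)] b_def by (simp add: iota_def)
    have R1': "(path_cat (ep tcolim_s (tcolim_t Phi) (X,a,X,f)) (ip X Y b), ep tcolim_s (tcolim_t Phi) (X,a,Y, PhiM X Y f)) \<in> T.pc"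
      using R1 unfolding ci ipb .
    have tP: "(X,a,Y, PhiM X Y f) \<in> TE B" using c3 ab Pf by (simp add: TE_iff)
    have R2: "(path_cat (ip X Y a) (ep tcolim_s (tcolim_t Phi) (Y, PhiO X Y a, Y, PhiM X Y f)), ep tcolim_s (tcolim_t Phi) (X,a,Y, PhiM X Y f)) \<in> T.pc"
      by (rule ip_comp_edge[OF _ tP]) simp
    define F1 where "F1 = ep tcolim_s (tcolim_t Phi) (X,a,X,f)"
    define F2 where "F2 = ep tcolim_s (tcolim_t Phi) (Y, PhiO X Y a, Y, PhiM X Y f)"
    have vF1: "T.vp F1" using eT(2)[OF e1] F1_def a_def by simp
    have vF2: "T.vp F2" using eT(2)[OF e2] F2_def Pf by simp
    have vipb: "T.vp (ip X Y b)" and vipa: "T.vp (ip X Y a)" using ip_valid[of B X Y] c3 ab by auto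
    have tF1: "path_tgt F1 = (X,b)" using F1_def b_def by simp
    have sF2: "path_src F2 = (Y, PhiO X Y a)" using F2_def by simp
    have ps1: "path_src (Psi F1) = r (X,a)" "path_tgt (Psi F1) = r (X,b)" using Psi_valid[OF vF1] F1_def b_def by auto
    have s1: "(path_cat (Psi F1) (Psi (ip X Y b)), path_cat (Psi F1) (r (X,b), [], r (X,b))) \<in> T.pc"
    proof -
      have "path_src (Psi (ip X Y b)) = r (X,b)" using Psi_valid(2)[OF vipb] by simp
      thus ?thesis using Psi_valid(1)[OF vF1] Psi_ip[OF c3(3-5) ab(2)] ps1 by (intro T.pc_cat_left) auto
    qed
    have s2: "(Psi (path_cat F1 (ip X Y b)), path_cat (Psi F1) (Psi (ip X Y b))) \<in> T.pc"
      using Psi_cat[OF vF1 vipb] tF1 by simp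
    have s3: "(Psi (path_cat F1 (ip X Y b)), Psi (path_cat (ip X Y a) F2)) \<in> T.pc"
      using Psi_cong[OF T.pc_trans[OF R1'[folded F1_def] T.pc_sym[OF R2[folded F2_def]]]] .
    have s4: "(Psi (path_cat (ip X Y a) F2), path_cat (Psi (ip X Y a)) (Psi F2)) \<in> T.pc"
      using Psi_cat[OF vipa vF2] sF2 by simp
    have s5: "(path_cat (Psi (ip X Y a)) (Psi F2), path_cat (r (X,a), [], r (X,a)) (Psi F2)) \<in> T.pc"
    proof -
      have "path_tgt (Psi (ip X Y a)) = r (Y, PhiO X Y a)" using Psi_valid(3)[OF vipa] by simp
      thus ?thesis using Psi_valid[OF vF2] Psi_ip[OF c3(3-5) ab(1)] r_const[OF obj_eq_step[OF _ c3(3-5) ab(1)]]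
        by (intro T.pc_cat_right) (auto simp: sF2)
    qed
    have e5: "path_cat (r (X,a), [], r (X,a)) (Psi F2) = Psi F2"
      using Psi_valid(2)[OF vF2] sF2 r_const[OF obj_eq_step[OF _ c3(3-5) ab(1)]] by simp
    have e1': "path_cat (Psi F1) (r (X,b), [], r (X,b)) = Psi F1" using ps1 by simp
    have "(Psi F1, Psi F2) \<in> T.pc"
      using T.pc_trans[OF T.pc_trans[OF T.pc_trans[OF T.pc_sym[OF s1[unfolded e1']] T.pc_sym[OF s2]] s3]
        T.pc_trans[OF s4 s5[unfolded e5]]] .
    thus ?thesis unfolding pp qq F1_def F2_def .
  qed
qed


sublocale F: pmor CV CE cs ct CR "TV B" "TE B" tcolim_s "tcolim_t Phi" "TR B" vmF emF by (rule Fpmor)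

lemma unPsi: assumes "T.vp p"
  shows "(path_cat (\<theta> (path_src p)) (path_cat (Psi p) (path_rev (\<theta> (path_tgt p)))), p) \<in> T.pc"
proof -
  have e: "path_src p \<in> TV B" "path_tgt p \<in> TV B" using vp_ends assms by auto
  note g1 = gV[OF e(1)] and g2 = gV[OF e(2)]
  have 1: "(path_cat (\<theta> (path_src p)) (path_cat (path_rev (\<theta> (path_src p))) (path_cat p (path_cat (\<theta> (path_tgt p)) (path_rev (\<theta> (path_tgt p)))))),
            path_cat p (path_cat (\<theta> (path_tgt p)) (path_rev (\<theta> (path_tgt p))))) \<in> T.pc"
    using g1 g2 assms by (intro T.pc_cancel_l T.vp_cat T.vp_rev) auto
  have 2: "(path_cat p (path_cat (\<theta> (path_tgt p)) (path_rev (\<theta> (path_tgt p)))), path_cat p (idp (path_src (\<theta> (path_tgt p))))) \<in> T.pc"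
    using g2 assms by (intro T.pc_cat_left T.pc_inv_right) auto
  have 3: "path_cat p (idp (path_src (\<theta> (path_tgt p)))) = p" using g2 by simp
  show ?thesis using T.pc_trans[OF 1 2] 3 unfolding Psi_def by (simp add: path_cat_assoc)
qed

lemma FD: assumes "T.vp p" shows "(psub vmF emF (psub dvm dem p), Psi p) \<in> T.pc"
proof -
  have "(psub (vmF \<circ> dvm) (\<lambda>e. psub vmF emF (dem e)) p,
         path_cat (path_rev (\<theta> (path_src p))) (path_cat p (\<theta> (path_tgt p)))) \<in> T.pc"
  proof (rule T.conj_gen[OF _ _ assms])
    fix v assume v: "v \<in> TV B"
    show "T.vp (\<theta> v) \<and> path_src (\<theta> v) = v \<and> path_tgt (\<theta> v) = (vmF \<circ> dvm) v"
      using gV[OF v] vmF_cl[OF v] by (simp add: dvm_def r_def)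
  next
    fix e assume e: "e \<in> TE B"
    obtain X x Y g where ex: "e = (X,x,Y,g)" by (cases e)
    have h: "X \<in> B" "Y \<in> B" "X \<subseteq> Y" "x \<in> Obj (Phi X)" "g \<in> Arr (Phi Y)" "dom (Phi Y) g = PhiO X Y x"
      using e ex by (simp_all add: TE_iff)
    have eC: "(Y,g) \<in> CE" unfolding CE_iff using h by blast
    have 0: "psub vmF emF (dem e) = Psi (ep tcolim_s (tcolim_t Phi) (Y, PhiO X Y x, Y, g))"
      using dem_ep[OF e[unfolded ex]] psubF_ep[OF eC] ex h(6) by (simp add: emF_def)
    define E' where "E' = ep tcolim_s (tcolim_t Phi) (Y, PhiO X Y x, Y, g)"
    have vE: "T.vp E'" using eT(2)[OF eC] h(6) E'_def by simp
    have vip: "T.vp (ip X Y x)" using ip_valid[of B X Y x] h by simp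
    have R: "(path_cat (ip X Y x) E', ep tcolim_s (tcolim_t Phi) e) \<in> T.pc"
      using ip_comp_edge[of B X x Y g] e ex E'_def by simp
    have 1: "(Psi (ep tcolim_s (tcolim_t Phi) e), Psi (path_cat (ip X Y x) E')) \<in> T.pc"
      using Psi_cong[OF T.pc_sym[OF R]] .
    have 2: "(Psi (path_cat (ip X Y x) E'), path_cat (Psi (ip X Y x)) (Psi E')) \<in> T.pc"
      using Psi_cat[OF vip vE] E'_def by simp
    have rr: "r (X,x) = r (Y, PhiO X Y x)" using r_const[OF obj_eq_step[OF _ h(1-4)]] by simp
    have 3: "(path_cat (Psi (ip X Y x)) (Psi E'), path_cat (r (X,x), [], r (X,x)) (Psi E')) \<in> T.pc"
    proof -
      have "path_tgt (Psi (ip X Y x)) = r (Y, PhiO X Y x)" using Psi_valid(3)[OF vip] by simp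
      moreover have "path_src (Psi E') = r (Y, PhiO X Y x)" using Psi_valid(2)[OF vE] E'_def by simp
      ultimately show ?thesis using Psi_valid(1)[OF vE] Psi_ip[OF h(1-4)] rr by (intro T.pc_cat_right) auto
    qed
    have 4: "path_cat (r (X,x), [], r (X,x)) (Psi E') = Psi E'" using Psi_valid(2)[OF vE] rr E'_def by simp
    have 5: "(Psi (ep tcolim_s (tcolim_t Phi) e), Psi E') \<in> T.pc"
      using T.pc_trans[OF T.pc_trans[OF 1 2] 3] unfolding 4 .
    have "(Psi (ep tcolim_s (tcolim_t Phi) e), psub vmF emF (dem e)) \<in> T.pc"
      using 5 unfolding 0 E'_def .
    thus "(psub vmF emF (dem e), path_cat (path_rev (\<theta> (tcolim_s e))) (path_cat (ep tcolim_s (tcolim_t Phi) e) (\<theta> (tcolim_t Phi e)))) \<in> T.pc"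
      unfolding Psi_def by (simp add: T.pc_sym)
  qed
  thus ?thesis unfolding Psi_def psub_comp .
qed

lemma faithful: assumes "T.vp p" "T.vp q" "path_src p = path_src q" "path_tgt p = path_tgt q"
  and "(psub dvm dem p, psub dvm dem q) \<in> C.pc"
  shows "(p,q) \<in> T.pc"
proof -
  have "(psub vmF emF (psub dvm dem p), psub vmF emF (psub dvm dem q)) \<in> T.pc" using F.pc_sub[OF assms(5)] .
  hence PP: "(Psi p, Psi q) \<in> T.pc" using FD[OF assms(1)] FD[OF assms(2)] by (meson T.pc_sym T.pc_trans)
  have e: "path_src p \<in> TV B" "path_tgt p \<in> TV B" using vp_ends assms by auto
  note g1 = gV[OF e(1)] and g2 = gV[OF e(2)]
  have "(path_cat (Psi p) (path_rev (\<theta> (path_tgt p))), path_cat (Psi q) (path_rev (\<theta> (path_tgt p)))) \<in> T.pc"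
    using g2 Psi_valid[OF assms(1)] by (intro T.pc_cat_right[OF PP] T.vp_rev) (auto simp: r_def)
  hence "(path_cat (\<theta> (path_src p)) (path_cat (Psi p) (path_rev (\<theta> (path_tgt p)))),
          path_cat (\<theta> (path_src p)) (path_cat (Psi q) (path_rev (\<theta> (path_tgt p))))) \<in> T.pc"
    using g1 Psi_valid[OF assms(1)] by (intro T.pc_cat_left) (auto simp: r_def)
  thus ?thesis using unPsi[OF assms(1)] unPsi[OF assms(2)] assms(3,4) by (metis T.pc_sym T.pc_trans)
qed

lemma DF: assumes "C.vp P" shows "(psub dvm dem (psub vmF emF P), P) \<in> C.pc"
proof -
  have "(psub (dvm \<circ> vmF) (\<lambda>e. psub dvm dem (emF e)) P,
         path_cat (path_rev ((\<lambda>c. (c,[],c)) (path_src P))) (path_cat P ((\<lambda>c. (c,[],c)) (path_tgt P)))) \<in> C.pc"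
  proof (rule C.conj_gen[OF _ _ assms])
    fix v assume v: "v \<in> CV"
    then obtain q where q: "q \<in> TV B" "v = cl q" unfolding colim_V_def by (rule quotientE)
    have "(dvm \<circ> vmF) v = v" using q vmF_cl[OF q(1)] cl_r[OF q(1)] by (simp add: dvm_def)
    thus "C.vp (v,[],v) \<and> path_src (v,[],v) = v \<and> path_tgt (v,[],v) = (dvm \<circ> vmF) v"
      using v by (simp add: C.vp_simp)
  next
    fix e assume e: "e \<in> CE"
    obtain Y f where ef: "e = (Y,f)" by (cases e)
    have eC: "(Y,f) \<in> CE" using e ef by simp
    hence h: "Y \<in> B" "f \<in> Arr (Phi Y)" unfolding CE_iff by auto
    have d: "(Y, dom (Phi Y) f) \<in> TV B" "(Y, cod (Phi Y) f) \<in> TV B" using dom_obj[OF h] h by (auto simp: tot_obj_iff)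
    have tE: "(Y, dom (Phi Y) f, Y, f) \<in> TE B" using eT(1)[OF eC] .
    have pe: "psub dvm dem (ep tcolim_s (tcolim_t Phi) (Y, dom (Phi Y) f, Y, f)) = ep cs ct (Y,f)"
      by (simp add: dem_def dvm_def)
    have d1: "(psub dvm dem (\<theta> (Y, dom (Phi Y) f)), (cl (Y, dom (Phi Y) f), [], cl (Y, dom (Phi Y) f))) \<in> C.pc"
      by (rule dtheta[OF d(1)])
    have d2: "(psub dvm dem (\<theta> (Y, cod (Phi Y) f)), (cl (Y, cod (Phi Y) f), [], cl (Y, cod (Phi Y) f))) \<in> C.pc"
      by (rule dtheta[OF d(2)])
    have vep: "C.vp (ep cs ct (Y,f))" by (rule C_ep_valid[OF eC])
    have "(path_cat (path_rev (psub dvm dem (\<theta> (Y, dom (Phi Y) f)))) (path_cat (ep cs ct (Y,f)) (psub dvm dem (\<theta> (Y, cod (Phi Y) f)))),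
           path_cat (path_rev (cl (Y, dom (Phi Y) f), [], cl (Y, dom (Phi Y) f))) (path_cat (ep cs ct (Y,f)) (cl (Y, cod (Phi Y) f), [], cl (Y, cod (Phi Y) f)))) \<in> C.pc"
      using C.pc_valid[OF d1] C.pc_valid[OF d2]
      by (intro C.pc_cat[OF C.pc_rev[OF d1]] C.pc_cat[OF C.pc_refl[OF vep] d2]) (simp_all add: dvm_def)
    moreover have "psub dvm dem (emF e) = path_cat (path_rev (psub dvm dem (\<theta> (Y, dom (Phi Y) f)))) (path_cat (ep cs ct (Y,f)) (psub dvm dem (\<theta> (Y, cod (Phi Y) f))))"
      unfolding ef emF_def Psi_def prod.case psub_cat psub_rev pe by simp
    ultimately show "(psub dvm dem (emF e), path_cat (path_rev (cs e, [], cs e)) (path_cat (ep cs ct e) (ct e, [], ct e))) \<in> C.pc"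
      using ef by simp
  qed
  thus ?thesis unfolding psub_comp using assms by (cases P) simp
qed

lemma full: assumes a: "a \<in> TV B" and b: "b \<in> TV B" and P: "C.vp P" "path_src P = dvm a" "path_tgt P = dvm b"
  shows "\<exists>p. T.vp p \<and> path_src p = a \<and> path_tgt p = b \<and> (psub dvm dem p, P) \<in> C.pc"
proof -
  define Q where "Q = psub vmF emF P"
  have vQ: "T.vp Q" "path_src Q = r a" "path_tgt Q = r b"
    using F.vp_sub[OF P(1)] P(2,3) vmF_cl[OF a] vmF_cl[OF b] Q_def by (auto simp: dvm_def)
  define p where "p = path_cat (\<theta> a) (path_cat Q (path_rev (\<theta> b)))"
  have vp: "T.vp p" unfolding p_def using gV[OF a] gV[OF b] vQ by (intro T.vp_cat T.vp_rev) (auto simp: r_def)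
  have sp: "path_src p = a" "path_tgt p = b" using gV(2)[OF a] gV(2)[OF b] p_def by auto
  have DQ: "(psub dvm dem Q, P) \<in> C.pc" using DF[OF P(1)] Q_def by simp
  have "(psub dvm dem p, path_cat (cl a, [], cl a) (path_cat P (path_rev (cl b, [], cl b)))) \<in> C.pc"
    unfolding p_def psub_cat psub_rev
    using dtheta[OF a] dtheta[OF b] DQ P(2,3) C.pc_valid[OF DQ] C.pc_valid[OF dtheta[OF a]] C.pc_valid[OF dtheta[OF b]]
    by (intro C.pc_cat C.pc_rev) (auto simp: dvm_def)
  hence "(psub dvm dem p, P) \<in> C.pc" using P(2,3) by (simp add: dvm_def)
  thus ?thesis using vp sp by blast
qed

lemma main_equiv: "is_equivalence T.gp C.gp dvm D.Fm"
proof (rule D.equiv_crit)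
  fix p q assume "T.vp p" "T.vp q" "path_src p = path_src q" "path_tgt p = path_tgt q" "(psub dvm dem p, psub dvm dem q) \<in> C.pc"
  thus "(p,q) \<in> T.pc" by (rule faithful)
next
  fix a b P assume "a \<in> TV B" "b \<in> TV B" "C.vp P" "path_src P = dvm a" "path_tgt P = dvm b"
  thus "\<exists>p. T.vp p \<and> path_src p = a \<and> path_tgt p = b \<and> (psub dvm dem p, P) \<in> C.pc" by (rule full)
next
  fix y assume "y \<in> CV"
  then obtain q where q: "q \<in> TV B" "y = cl q" unfolding colim_V_def by (rule quotientE)
  thus "\<exists>x\<in>TV B. dvm x = y" by (auto simp: dvm_def)
qed

end


theorem theorem2p1:
  fixes n :: nat
    and Phi :: "nat set \<Rightarrow> ('o,'m) gpd"
    and PhiO :: "nat set \<Rightarrow> nat set \<Rightarrow> 'o \<Rightarrow> 'o"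
    and PhiM :: "nat set \<Rightarrow> nat set \<Rightarrow> 'm \<Rightarrow> 'm"
  assumes "n \<ge> 2"
    and "gpd_diagram (Bsets {1..n}) Phi PhiO PhiM"
    and A1: "\<forall>k. 1 \<le> k \<and> k \<le> n - 1 \<longrightarrow> cond_A Phi PhiO PhiM {1..k} {}"
    and A2: "\<forall>k U. 1 \<le> k \<and> k \<le> n - 2 \<and> U \<subseteq> {k+2..n} \<longrightarrow> cond_A Phi PhiO PhiM ({1..k} \<union> U) U"
  shows "is_equivalence (tcolim_gpd (Bsets {1..n}) Phi PhiO PhiM) (colim_gpd (Bsets {1..n}) Phi PhiO PhiM)
           (delta_obj (Bsets {1..n}) Phi PhiO) (delta_arr (Bsets {1..n}) Phi PhiO PhiM)"
proof -
  interpret dia n Phi PhiO PhiM by unfold_locales (rule assms(2))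
  have inj: "\<forall>k. 1 \<le> k \<and> k \<le> n \<longrightarrow> INJ k"
  proof (intro allI impI)
    fix k assume k: "1 \<le> k \<and> k \<le> n"
    show "INJ k"
    proof (cases "k = 1")
      case True thus ?thesis using INJ_1 by simp
    next
      case k1: False
      show ?thesis
      proof (cases "k = n")
        case True
        have c: "cond_A Phi PhiO PhiM {1..n-1} {}" using A1 assms(1) by simp
        have e1: "{1..n} - {n} = {1..n-1}" using assms(1) by auto
        have e2: "{n+1..n} = ({}::nat set)" by simp
        show ?thesis using INJ_from_cond[of k] k c True e1 e2 by simp
      next
        case False
        have kk: "1 \<le> k - 1" "k - 1 \<le> n - 2" "{k+1..n} \<subseteq> {k - 1 + 2..n}" using k k1 False by auto
        have c: "cond_A Phi PhiO PhiM ({1..k-1} \<union> {k+1..n}) {k+1..n}" using A2 kk by blast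
        have e1: "{1..k-1} \<union> {k+1..n} = {1..n} - {k}" using k k1 by auto
        show ?thesis using INJ_from_cond[of k] k c e1 by simp
      qed
    qed
  qed
  obtain \<theta> where g: "good (Im n) \<theta>" using thin[of n] inj by blast
  interpret fin n Phi PhiO PhiM \<theta> by unfold_locales (use g Im_n in simp)
  have e1: "tcolim_gpd (Bsets {1..n}) Phi PhiO PhiM = T.gp" by (simp add: tcolim_gpd_def)
  have e2: "colim_gpd (Bsets {1..n}) Phi PhiO PhiM = C.gp" by (simp add: colim_gpd_def)
  have e3: "delta_obj (Bsets {1..n}) Phi PhiO = dvm" by (rule ext) (simp add: delta_obj_def dvm_def)
  have e4: "delta_arr (Bsets {1..n}) Phi PhiO PhiM = D.Fm"
  proof (rule ext)
    fix X
    show "delta_arr (Bsets {1..n}) Phi PhiO PhiM X = D.Fm X"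
      unfolding delta_arr_def pres_fun_arr_def D.Fm_def path_map_psub[where s = tcolim_s and t = "tcolim_t Phi"]
      by (simp add: e3 dem_def[abs_def])
  qed
  show ?thesis unfolding e1 e2 e3 e4 by (rule main_equiv)
qed


end
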